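(* Let $d\ge 1$, $1\le K\le d$, $p\in[1,\infty)$, and let $P_p(\mathbb{R}^d)$ be the set of Borel probability measures on $\mathbb{R}^d$ with finite $p$-th moment. Then the maximum $K$-sliced $p$-Wasserstein distance $\max\text{-}K\text{-}SW_p$ (defined in the context) is a metric on $P_p(\mathbb{R}^d)$: for all $\mu_1,\mu_2,\mu_3\in P_p(\mathbb{R}^d)$ it is nonnegative and finite, $\max\text{-}K\text{-}SW_p(\mu_1,\mu_2)=0$ if and only if $\mu_1=\mu_2$, it is symmetric, and $\max\text{-}K\text{-}SW_p(\mu_1,\mu_3)\le \max\text{-}K\text{-}SW_p(\mu_1,\mu_2)+\max\text{-}K\text{-}SW_p(\mu_2,\mu_3)$.
   Context: For $\theta\in\mathbb{S}^{d-1}$ (the unit sphere in $\mathbb{R}^d$) and a probability measure $\mu$ on $\mathbb{R}^d$, let $\mathcal{R}\mu(\cdot,\theta)$ denote the one-dimensional marginal (slice) of $\mu$ along $\theta$, i.e. the pushforward of $\mu$ under $x\mapsto\langle x,\theta\rangle$ (for a density $p$ this is the Radon transform $(\mathcal{R}p)(t,\theta)=\int_{\mathbb{R}^d}p(x)\delta(t-\langle x,\theta\rangle)\,dx$). $W_p$ denotes the $p$-Wasserstein distance between probability measures on $\mathbb{R}$: $W_p(\nu_1,\nu_2)=\inf_{\gamma\in\Pi(\nu_1,\nu_2)}\big(\mathbb{E}_{(x,y)\sim\gamma}|x-y|^p\big)^{1/p}$, where $\Pi(\nu_1,\nu_2)$ is the set of couplings. The maximum $K$-sliced $p$-Wasserstein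 distance is $$\max\text{-}K\text{-}SW_p(\mu_1,\mu_2)=\max_{\{\theta_1,\dots,\theta_K\}\ \text{orthonormal in }\mathbb{R}^d}\Big(\frac1K\sum_{k=1}^K W_p^p\big(\mathcal{R}\mu_1(\cdot,\theta_k),\mathcal{R}\mu_2(\cdot,\theta_k)\big)\Big)^{1/p}.$$ The maximum sliced $p$-Wasserstein distance is $\max\text{-}SW_p(\mu_1,\mu_2)=\max_{\theta\in\mathbb{S}^{d-1}}W_p(\mathcal{R}\mu_1(\cdot,\theta),\mathcal{R}\mu_2(\cdot,\theta))$ (the case $K=1$). *)

theory Defs
  imports "HOL-Probability.Probability"
begin

definition slice :: "'a::euclidean_space measure \<Rightarrow> 'a \<Rightarrow> real measure" where
  "slice \<mu> \<theta> = distr \<mu> borel (\<lambda>x. x \<bullet> \<theta>)"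

definition couplings :: "real measure \<Rightarrow> real measure \<Rightarrow> (real \<times> real) measure set" where
  "couplings \<nu>1 \<nu>2 = {\<gamma>. prob_space \<gamma> \<and> sets \<gamma> = sets (borel \<Otimes>\<^sub>M borel)
      \<and> distr \<gamma> borel fst = \<nu>1 \<and> distr \<gamma> borel snd = \<nu>2}"

definition Wpp :: "real \<Rightarrow> real measure \<Rightarrow> real measure \<Rightarrow> ennreal" where
  "Wpp p \<nu>1 \<nu>2 = (INF \<gamma>\<in>couplings \<nu>1 \<nu>2.
      \<integral>\<^sup>+ z. ennreal (\<bar>fst z - snd z\<bar> powr p) \<partial>\<gamma>)"

definition enn_root :: "real \<Rightarrow> ennreal \<Rightarrow> ennreal" where
  "enn_root p x = (if x = \<infinity> then \<infinity> else ennreal (enn2real x powr (1 / p)))"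

definition orthonormal_frame :: "nat \<Rightarrow> (nat \<Rightarrow> 'a::euclidean_space) \<Rightarrow> bool" where
  "orthonormal_frame K \<theta> \<longleftrightarrow> (\<forall>i<K. \<forall>j<K. \<theta> i \<bullet> \<theta> j = (if i = j then 1 else 0))"

definition max_K_SW :: "nat \<Rightarrow> real \<Rightarrow> 'a::euclidean_space measure \<Rightarrow> 'a measure \<Rightarrow> ennreal" where
  "max_K_SW K p \<mu>1 \<mu>2 = (SUP \<theta>\<in>{\<theta>. orthonormal_frame K \<theta>}.
      enn_root p ((\<Sum>k<K. Wpp p (slice \<mu>1 (\<theta> k)) (slice \<mu>2 (\<theta> k))) / of_nat K))"

definition P_p :: "real \<Rightarrow> 'a::euclidean_space measure set" where
  "P_p p = {\<mu>. prob_space \<mu> \<and> sets \<mu> = sets borel \<and>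
      (\<integral>\<^sup>+ x. ennreal (norm x powr p) \<partial>\<mu>) < \<infinity>}"

end

theory Submission
  imports Defs
begin


definition U01 :: "real measure" where "U01 = restrict_space lborel {0<..<1}"
definition qf :: "real measure \<Rightarrow> real \<Rightarrow> real" where "qf \<nu> u = Inf {x. u \<le> cdf \<nu> x}"

lemma prob_space_U01: "prob_space U01"
  by (auto simp add: U01_def emeasure_restrict_space space_restrict_space intro!: prob_spaceI)

lemma space_U01: "space U01 = {0<..<1}"
  by (simp add: U01_def space_restrict_space)

lemma sets_U01: "sets U01 = sets (restrict_space borel {0<..<1})"
  unfolding U01_def by (rule sets_restrict_space_cong) simp

lemma qf_le_iff:
  assumes "real_distribution \<nu>" "0 < u" "u < 1"
  shows "qf \<nu> u \<le> x \<longleftrightarrow> u \<le> cdf \<nu> x"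
proof -
  interpret cdf_distribution \<nu> using assms(1) by (simp add: cdf_distribution_def)
  show ?thesis using pseudoinverse[OF assms(2,3)] unfolding qf_def by blast
qed

lemma qf_measurable[measurable]:
  assumes "real_distribution \<nu>"
  shows "qf \<nu> \<in> borel_measurable U01"
proof -
  interpret cdf_distribution \<nu> using assms(1) by (simp add: cdf_distribution_def)
  have "(\<lambda>u. Inf {x. u \<le> cdf \<nu> x}) \<in> borel_measurable (restrict_space borel {0<..<1})"
    by (rule measurable_CI)
  then show ?thesis unfolding qf_def using sets_U01 by (subst measurable_cong_sets[OF sets_U01 refl])
qed

lemma distr_qf:
  assumes "real_distribution \<nu>"
  shows "distr U01 borel (qf \<nu>) = \<nu>"
proof -
  interpret cdf_distribution \<nu> using assms(1) by (simp add: cdf_distribution_def)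
  show ?thesis using distr_I_eq_M unfolding U01_def qf_def by simp
qed




lemma cost_rep:
  fixes N :: "'b measure" and w :: "'b \<Rightarrow> ennreal" and D :: "'b \<Rightarrow> (real \<times> real) set"
  assumes N: "sigma_finite_measure N"
    and g: "prob_space \<gamma>" "sets \<gamma> = sets (borel \<Otimes>\<^sub>M borel)"
    and meas: "(\<lambda>(z,t). w t * indicator (D t) z) \<in> borel_measurable ((borel \<Otimes>\<^sub>M borel) \<Otimes>\<^sub>M N)"
    and rep: "\<And>z. c z = (\<integral>\<^sup>+ t. w t * indicator (D t) z \<partial>N)"
    and Ds: "\<And>t. D t \<in> sets (borel \<Otimes>\<^sub>M borel)"
  shows "(\<integral>\<^sup>+ z. c z \<partial>\<gamma>) = (\<integral>\<^sup>+ t. w t * emeasure \<gamma> (D t) \<partial>N)"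
proof -
  interpret g: prob_space \<gamma> by fact
  interpret N: sigma_finite_measure N by fact
  interpret P: pair_sigma_finite \<gamma> N by unfold_locales
  have sp: "sets (\<gamma> \<Otimes>\<^sub>M N) = sets ((borel \<Otimes>\<^sub>M borel) \<Otimes>\<^sub>M N)"
    by (rule sets_pair_measure_cong[OF g(2) refl])
  have m: "(\<lambda>(z,t). w t * indicator (D t) z) \<in> borel_measurable (\<gamma> \<Otimes>\<^sub>M N)"
    using meas by (subst measurable_cong_sets[OF sp refl])
  have "(\<integral>\<^sup>+ z. c z \<partial>\<gamma>) = (\<integral>\<^sup>+ z. \<integral>\<^sup>+ t. w t * indicator (D t) z \<partial>N \<partial>\<gamma>)"
    using rep by simp
  also have "\<dots> = (\<integral>\<^sup>+ t. \<integral>\<^sup>+ z. w t * indicator (D t) z \<partial>\<gamma> \<partial>N)"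
    using P.Fubini[OF m] by simp
  also have "\<dots> = (\<integral>\<^sup>+ t. w t * emeasure \<gamma> (D t) \<partial>N)"
  proof (rule nn_integral_cong)
    fix t
    have "D t \<in> sets \<gamma>" using Ds g(2) by simp
    then show "(\<integral>\<^sup>+ z. w t * indicator (D t) z \<partial>\<gamma>) = w t * emeasure \<gamma> (D t)"
      by (simp add: nn_integral_cmult_indicator)
  qed
  finally show ?thesis .
qed

lemma cost_mono:
  fixes N :: "'b measure" and w :: "'b \<Rightarrow> ennreal" and D :: "'b \<Rightarrow> (real \<times> real) set"
  assumes N: "sigma_finite_measure N"
    and g1: "prob_space \<gamma>1" "sets \<gamma>1 = sets (borel \<Otimes>\<^sub>M borel)"
    and g2: "prob_space \<gamma>2" "sets \<gamma>2 = sets (borel \<Otimes>\<^sub>M borel)"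
    and meas: "(\<lambda>(z,t). w t * indicator (D t) z) \<in> borel_measurable ((borel \<Otimes>\<^sub>M borel) \<Otimes>\<^sub>M N)"
    and rep: "\<And>z. c z = (\<integral>\<^sup>+ t. w t * indicator (D t) z \<partial>N)"
    and Ds: "\<And>t. D t \<in> sets (borel \<Otimes>\<^sub>M borel)"
    and le: "\<And>t. w t \<noteq> 0 \<Longrightarrow> emeasure \<gamma>1 (D t) \<le> emeasure \<gamma>2 (D t)"
  shows "(\<integral>\<^sup>+ z. c z \<partial>\<gamma>1) \<le> (\<integral>\<^sup>+ z. c z \<partial>\<gamma>2)"
  unfolding cost_rep[OF N g1 meas rep Ds] cost_rep[OF N g2 meas rep Ds]
  by (intro nn_integral_mono) (metis le mult_left_mono mult_zero_left zero_le order_refl)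




definition como :: "real measure \<Rightarrow> real measure \<Rightarrow> (real \<times> real) measure" where
  "como \<nu>1 \<nu>2 = distr U01 (borel \<Otimes>\<^sub>M borel) (\<lambda>u. (qf \<nu>1 u, qf \<nu>2 u))"

lemma como_meas:
  assumes "real_distribution \<nu>1" "real_distribution \<nu>2"
  shows "(\<lambda>u. (qf \<nu>1 u, qf \<nu>2 u)) \<in> U01 \<rightarrow>\<^sub>M borel \<Otimes>\<^sub>M borel"
  using qf_measurable[OF assms(1)] qf_measurable[OF assms(2)] by measurable

lemma como_coupling:
  assumes "real_distribution \<nu>1" "real_distribution \<nu>2"
  shows "como \<nu>1 \<nu>2 \<in> couplings \<nu>1 \<nu>2"
proof -
  have m: "(\<lambda>u. (qf \<nu>1 u, qf \<nu>2 u)) \<in> U01 \<rightarrow>\<^sub>M borel \<Otimes>\<^sub>M borel" by (rule como_meas[OF assms])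
  interpret U: prob_space U01 by (rule prob_space_U01)
  have "prob_space (como \<nu>1 \<nu>2)" unfolding como_def by (rule U.prob_space_distr[OF m])
  moreover have "distr (como \<nu>1 \<nu>2) borel fst = \<nu>1"
    unfolding como_def using m
    by (subst distr_distr) (auto simp: comp_def distr_qf[OF assms(1)])
  moreover have "distr (como \<nu>1 \<nu>2) borel snd = \<nu>2"
    unfolding como_def using m
    by (subst distr_distr) (auto simp: comp_def distr_qf[OF assms(2)])
  ultimately show ?thesis unfolding couplings_def como_def by simp
qed

lemma S_sets[measurable]:
  "{z::real\<times>real. fst z \<le> s \<and> t < snd z} \<in> sets (borel \<Otimes>\<^sub>M borel)"
  "{z::real\<times>real. fst z \<le> s} \<in> sets (borel \<Otimes>\<^sub>M borel)"
  "{z::real\<times>real. snd z \<le> t} \<in> sets (borel \<Otimes>\<^sub>M borel)"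
  "{z::real\<times>real. snd z \<le> s \<and> t < fst z} \<in> sets (borel \<Otimes>\<^sub>M borel)"
  "{z::real\<times>real. fst z \<le> t} \<in> sets (borel \<Otimes>\<^sub>M borel)"
  "{z::real\<times>real. snd z \<le> s} \<in> sets (borel \<Otimes>\<^sub>M borel)"
proof -
  have "{z \<in> space (borel \<Otimes>\<^sub>M borel). fst z \<le> s \<and> t < snd z} \<in> sets (borel \<Otimes>\<^sub>M (borel::real measure))"
    "{z \<in> space (borel \<Otimes>\<^sub>M borel). fst z \<le> s} \<in> sets (borel \<Otimes>\<^sub>M (borel::real measure))"
    "{z \<in> space (borel \<Otimes>\<^sub>M borel). snd z \<le> t} \<in> sets (borel \<Otimes>\<^sub>M (borel::real measure))"
    "{z \<in> space (borel \<Otimes>\<^sub>M borel). snd z \<le> s \<and> t < fst z} \<in> sets (borel \<Otimes>\<^sub>M (borel::real measure))"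
    "{z \<in> space (borel \<Otimes>\<^sub>M borel). fst z \<le> t} \<in> sets (borel \<Otimes>\<^sub>M (borel::real measure))"
    "{z \<in> space (borel \<Otimes>\<^sub>M borel). snd z \<le> s} \<in> sets (borel \<Otimes>\<^sub>M (borel::real measure))"
    by measurable
  then show "{z::real\<times>real. fst z \<le> s \<and> t < snd z} \<in> sets (borel \<Otimes>\<^sub>M borel)"
  "{z::real\<times>real. fst z \<le> s} \<in> sets (borel \<Otimes>\<^sub>M borel)"
  "{z::real\<times>real. snd z \<le> t} \<in> sets (borel \<Otimes>\<^sub>M borel)"
  "{z::real\<times>real. snd z \<le> s \<and> t < fst z} \<in> sets (borel \<Otimes>\<^sub>M borel)"
  "{z::real\<times>real. fst z \<le> t} \<in> sets (borel \<Otimes>\<^sub>M borel)"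
  "{z::real\<times>real. snd z \<le> s} \<in> sets (borel \<Otimes>\<^sub>M borel)"
    by (simp_all add: space_pair_measure)
qed

lemma coupling_lower:
  assumes "\<gamma> \<in> couplings \<nu>1 \<nu>2"
  shows "cdf \<nu>1 s - cdf \<nu>2 t \<le> measure \<gamma> {z. fst z \<le> s \<and> t < snd z}"
proof -
  have g: "prob_space \<gamma>" "sets \<gamma> = sets (borel \<Otimes>\<^sub>M borel)" "distr \<gamma> borel fst = \<nu>1" "distr \<gamma> borel snd = \<nu>2"
    using assms by (auto simp: couplings_def)
  interpret g: prob_space \<gamma> by fact
  have sp: "space \<gamma> = UNIV" using sets_eq_imp_space_eq[OF g(2)] by (simp add: space_pair_measure)
  have mf: "fst \<in> \<gamma> \<rightarrow>\<^sub>M borel" "snd \<in> \<gamma> \<rightarrow>\<^sub>M borel"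
    using g(2) by (simp_all add: measurable_cong_sets[OF g(2) refl])
  have c1: "cdf \<nu>1 s = measure \<gamma> {z. fst z \<le> s}"
    unfolding cdf_def g(3)[symmetric] using mf by (subst measure_distr) (auto simp: sp vimage_def)
  have c2: "cdf \<nu>2 t = measure \<gamma> {z. snd z \<le> t}"
    unfolding cdf_def g(4)[symmetric] using mf by (subst measure_distr) (auto simp: sp vimage_def)
  have ev: "{z. fst z \<le> s \<and> t < snd z} \<in> sets \<gamma>" "{z. snd z \<le> t} \<in> sets \<gamma>" "{z. fst z \<le> s} \<in> sets \<gamma>"
    by (simp_all add: g(2))
  have "measure \<gamma> {z. fst z \<le> s} \<le> measure \<gamma> ({z. fst z \<le> s \<and> t < snd z} \<union> {z. snd z \<le> t})"
    using ev by (intro g.finite_measure_mono) auto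
  also have "\<dots> \<le> measure \<gamma> {z. fst z \<le> s \<and> t < snd z} + measure \<gamma> {z. snd z \<le> t}"
    using ev by (intro measure_Un_le) auto
  finally show ?thesis using c1 c2 by simp
qed

lemma como_upper:
  assumes "real_distribution \<nu>1" "real_distribution \<nu>2"
  shows "emeasure (como \<nu>1 \<nu>2) {z. fst z \<le> s \<and> t < snd z} \<le> ennreal (max 0 (cdf \<nu>1 s - cdf \<nu>2 t))"
proof -
  have m: "(\<lambda>u. (qf \<nu>1 u, qf \<nu>2 u)) \<in> U01 \<rightarrow>\<^sub>M borel \<Otimes>\<^sub>M borel" by (rule como_meas[OF assms])
  have "emeasure (como \<nu>1 \<nu>2) {z. fst z \<le> s \<and> t < snd z}
      = emeasure U01 ((\<lambda>u. (qf \<nu>1 u, qf \<nu>2 u)) -` {z. fst z \<le> s \<and> t < snd z} \<inter> space U01)"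
    unfolding como_def using m by (subst emeasure_distr) auto
  also have "(\<lambda>u. (qf \<nu>1 u, qf \<nu>2 u)) -` {z. fst z \<le> s \<and> t < snd z} \<inter> space U01
      = {u. 0 < u \<and> u < 1 \<and> u \<le> cdf \<nu>1 s \<and> \<not> u \<le> cdf \<nu>2 t}"
  proof (rule set_eqI)
    fix u
    show "u \<in> (\<lambda>u. (qf \<nu>1 u, qf \<nu>2 u)) -` {z. fst z \<le> s \<and> t < snd z} \<inter> space U01 \<longleftrightarrow>
      u \<in> {u. 0 < u \<and> u < 1 \<and> u \<le> cdf \<nu>1 s \<and> \<not> u \<le> cdf \<nu>2 t}"
    proof (cases "0 < u \<and> u < 1")
      case True
      then have "qf \<nu>1 u \<le> s \<longleftrightarrow> u \<le> cdf \<nu>1 s" "qf \<nu>2 u \<le> t \<longleftrightarrow> u \<le> cdf \<nu>2 t"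
        using qf_le_iff[OF assms(1)] qf_le_iff[OF assms(2)] by blast+
      then show ?thesis using True by (simp add: space_U01 not_le[symmetric])
    next
      case False
      then show ?thesis by (auto simp add: space_U01)
    qed
  qed
  also have "emeasure U01 \<dots> \<le> emeasure lborel {cdf \<nu>2 t <.. cdf \<nu>1 s}"
    unfolding U01_def
    by (subst emeasure_restrict_space) (auto intro!: emeasure_mono)
  also have "\<dots> \<le> ennreal (max 0 (cdf \<nu>1 s - cdf \<nu>2 t))"
    by (cases "cdf \<nu>2 t \<le> cdf \<nu>1 s") auto
  finally show ?thesis .
qed

lemma como_le_coupling:
  assumes "real_distribution \<nu>1" "real_distribution \<nu>2" "\<gamma> \<in> couplings \<nu>1 \<nu>2"
  shows "emeasure (como \<nu>1 \<nu>2) {z. fst z \<le> s \<and> t < snd z} \<le> emeasure \<gamma> {z. fst z \<le> s \<and> t < snd z}"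
proof -
  have g: "prob_space \<gamma>" "sets \<gamma> = sets (borel \<Otimes>\<^sub>M borel)"
    using assms by (auto simp: couplings_def)
  interpret g: prob_space \<gamma> by fact
  have "ennreal (max 0 (cdf \<nu>1 s - cdf \<nu>2 t)) \<le> ennreal (measure \<gamma> {z. fst z \<le> s \<and> t < snd z})"
    using coupling_lower[OF assms(3), of s t] by (intro ennreal_leI) auto
  also have "\<dots> = emeasure \<gamma> {z. fst z \<le> s \<and> t < snd z}"
    by (rule g.emeasure_eq_measure[symmetric])
  finally show ?thesis using como_upper[OF assms(1,2), of s t] by (rule order_trans[rotated])
qed

lemma coupling_lowerB:
  assumes "\<gamma> \<in> couplings \<nu>1 \<nu>2"
  shows "cdf \<nu>2 s - cdf \<nu>1 t \<le> measure \<gamma> {z. snd z \<le> s \<and> t < fst z}"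
proof -
  have g: "prob_space \<gamma>" "sets \<gamma> = sets (borel \<Otimes>\<^sub>M borel)" "distr \<gamma> borel fst = \<nu>1" "distr \<gamma> borel snd = \<nu>2"
    using assms by (auto simp: couplings_def)
  interpret g: prob_space \<gamma> by fact
  have sp: "space \<gamma> = UNIV" using sets_eq_imp_space_eq[OF g(2)] by (simp add: space_pair_measure)
  have mf: "fst \<in> \<gamma> \<rightarrow>\<^sub>M borel" "snd \<in> \<gamma> \<rightarrow>\<^sub>M borel"
    using g(2) by (simp_all add: measurable_cong_sets[OF g(2) refl])
  have c1: "cdf \<nu>2 s = measure \<gamma> {z. snd z \<le> s}"
    unfolding cdf_def g(4)[symmetric] using mf by (subst measure_distr) (auto simp: sp vimage_def)
  have c2: "cdf \<nu>1 t = measure \<gamma> {z. fst z \<le> t}"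
    unfolding cdf_def g(3)[symmetric] using mf by (subst measure_distr) (auto simp: sp vimage_def)
  have ev: "{z. snd z \<le> s \<and> t < fst z} \<in> sets \<gamma>" "{z. fst z \<le> t} \<in> sets \<gamma>" "{z. snd z \<le> s} \<in> sets \<gamma>"
    by (simp_all add: g(2))
  have "measure \<gamma> {z. snd z \<le> s} \<le> measure \<gamma> ({z. snd z \<le> s \<and> t < fst z} \<union> {z. fst z \<le> t})"
    using ev by (intro g.finite_measure_mono) auto
  also have "\<dots> \<le> measure \<gamma> {z. snd z \<le> s \<and> t < fst z} + measure \<gamma> {z. fst z \<le> t}"
    using ev by (intro measure_Un_le) auto
  finally show ?thesis using c1 c2 by simp
qed

lemma como_upperB:
  assumes "real_distribution \<nu>1" "real_distribution \<nu>2"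
  shows "emeasure (como \<nu>1 \<nu>2) {z. snd z \<le> s \<and> t < fst z} \<le> ennreal (max 0 (cdf \<nu>2 s - cdf \<nu>1 t))"
proof -
  have m: "(\<lambda>u. (qf \<nu>1 u, qf \<nu>2 u)) \<in> U01 \<rightarrow>\<^sub>M borel \<Otimes>\<^sub>M borel" by (rule como_meas[OF assms])
  have "emeasure (como \<nu>1 \<nu>2) {z. snd z \<le> s \<and> t < fst z}
      = emeasure U01 ((\<lambda>u. (qf \<nu>1 u, qf \<nu>2 u)) -` {z. snd z \<le> s \<and> t < fst z} \<inter> space U01)"
    unfolding como_def using m by (subst emeasure_distr) auto
  also have "(\<lambda>u. (qf \<nu>1 u, qf \<nu>2 u)) -` {z. snd z \<le> s \<and> t < fst z} \<inter> space U01
      = {u. 0 < u \<and> u < 1 \<and> u \<le> cdf \<nu>2 s \<and> \<not> u \<le> cdf \<nu>1 t}"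
  proof (rule set_eqI)
    fix u
    show "u \<in> (\<lambda>u. (qf \<nu>1 u, qf \<nu>2 u)) -` {z. snd z \<le> s \<and> t < fst z} \<inter> space U01 \<longleftrightarrow>
      u \<in> {u. 0 < u \<and> u < 1 \<and> u \<le> cdf \<nu>2 s \<and> \<not> u \<le> cdf \<nu>1 t}"
    proof (cases "0 < u \<and> u < 1")
      case True
      then have "qf \<nu>2 u \<le> s \<longleftrightarrow> u \<le> cdf \<nu>2 s" "qf \<nu>1 u \<le> t \<longleftrightarrow> u \<le> cdf \<nu>1 t"
        using qf_le_iff[OF assms(1)] qf_le_iff[OF assms(2)] by blast+
      then show ?thesis using True by (simp add: space_U01 not_le[symmetric])
    next
      case False
      then show ?thesis by (auto simp add: space_U01)
    qed
  qed
  also have "emeasure U01 \<dots> \<le> emeasure lborel {cdf \<nu>1 t <.. cdf \<nu>2 s}"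
    unfolding U01_def
    by (subst emeasure_restrict_space) (auto intro!: emeasure_mono)
  also have "\<dots> \<le> ennreal (max 0 (cdf \<nu>2 s - cdf \<nu>1 t))"
    by (cases "cdf \<nu>1 t \<le> cdf \<nu>2 s") auto
  finally show ?thesis .
qed

lemma como_le_couplingB:
  assumes "real_distribution \<nu>1" "real_distribution \<nu>2" "\<gamma> \<in> couplings \<nu>1 \<nu>2"
  shows "emeasure (como \<nu>1 \<nu>2) {z. snd z \<le> s \<and> t < fst z} \<le> emeasure \<gamma> {z. snd z \<le> s \<and> t < fst z}"
proof -
  have g: "prob_space \<gamma>" "sets \<gamma> = sets (borel \<Otimes>\<^sub>M borel)"
    using assms by (auto simp: couplings_def)
  interpret g: prob_space \<gamma> by fact
  have "ennreal (max 0 (cdf \<nu>2 s - cdf \<nu>1 t)) \<le> ennreal (measure \<gamma> {z. snd z \<le> s \<and> t < fst z})"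
    using coupling_lowerB[OF assms(3), of s t] by (intro ennreal_leI) auto
  also have "\<dots> = emeasure \<gamma> {z. snd z \<le> s \<and> t < fst z}"
    by (rule g.emeasure_eq_measure[symmetric])
  finally show ?thesis using como_upperB[OF assms(1,2), of s t] by (rule order_trans[rotated])
qed




definition kp :: "real \<Rightarrow> real \<Rightarrow> real" where
  "kp p r = (if 0 < r then p * (p - 1) * r powr (p - 2) else 0)"

lemma kp_nonneg: "1 < p \<Longrightarrow> 0 \<le> kp p r"
  by (simp add: kp_def)

lemma kernel_int:
  assumes p: "1 < p" and a: "0 \<le> a"
  shows "(\<integral>\<^sup>+ r. ennreal (kp p r * max 0 (a - r)) \<partial>lborel) = ennreal (a powr p)"
proof (cases "a = 0")
  case True
  have "(\<lambda>r. ennreal (kp p r * max 0 (a - r))) = (\<lambda>r. 0)"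
    by (rule ext) (simp add: kp_def True)
  then show ?thesis using True by simp
next
  case False
  with a have a0: "0 < a" by simp
  define f where "f r = p * (p - 1) * r powr (p - 2) * (a - r)" for r
  define G where "G r = p * a * r powr (p - 1) - (p - 1) * r powr p" for r
  have cont: "continuous_on {0..a} G"
    unfolding G_def using p
    by (intro continuous_intros continuous_on_powr') auto
  have der: "(G has_vector_derivative f r) (at r)" if r: "r \<in> {0<..<a}" for r
  proof -
    from r have r0: "0 < r" by simp
    have "(G has_real_derivative (p * a * ((p - 1) * r powr (p - 1 - 1)) - (p - 1) * (p * r powr (p - 1)))) (at r)"
      unfolding G_def using r0
      by (intro derivative_eq_intros has_real_derivative_powr) auto
    moreover have "p * a * ((p - 1) * r powr (p - 1 - 1)) - (p - 1) * (p * r powr (p - 1)) = f r"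
    proof -
      have "r powr (p - 2) * r = r powr (p - 2) * r powr 1" using r0 by simp
      also have "\<dots> = r powr (p - 2 + 1)" by (rule powr_add[symmetric])
      also have "p - 2 + 1 = p - 1" by simp
      finally have "r powr (p - 1) = r powr (p - 2) * r" by simp
      then show ?thesis unfolding f_def by (simp add: algebra_simps)
    qed
    ultimately show ?thesis by (simp add: has_real_derivative_iff_has_vector_derivative)
  qed
  have "(f has_integral (G a - G 0)) {0..a}"
    using a cont der by (intro fundamental_theorem_of_calculus_interior) auto
  moreover have "G a - G 0 = a powr p"
  proof -
    have "a * a powr (p - 1) = a powr 1 * a powr (p - 1)" using a0 by simp
    also have "\<dots> = a powr (1 + (p - 1))" by (rule powr_add[symmetric])
    also have "1 + (p - 1) = p" by simp
    finally have "a * a powr (p - 1) = a powr p" .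
    then show ?thesis unfolding G_def using p by (simp add: algebra_simps)
  qed
  ultimately have hi: "(f has_integral a powr p) {0..a}" by simp
  have fn: "\<And>r. r \<in> {0..a} \<Longrightarrow> 0 \<le> f r"
    unfolding f_def using p by auto
  have "(\<integral>\<^sup>+ r. ennreal (indicator {0..a} r * f r) \<partial>lborel) = ennreal (a powr p)"
    using nn_integral_has_integral_lebesgue[OF fn hi] by simp
  moreover have "\<And>r. kp p r * max 0 (a - r) = indicator {0..a} r * f r"
    unfolding kp_def f_def by (auto simp: indicator_def max_def)
  ultimately show ?thesis by simp
qed




definition DD :: "real \<times> real \<Rightarrow> (real \<times> real) set" where
  "DD t = {z. fst z \<le> snd t \<and> snd t + fst t < snd z} \<union> {z. snd z \<le> snd t \<and> snd t + fst t < fst z}"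

lemma DD_sets[measurable]: "DD t \<in> sets (borel \<Otimes>\<^sub>M borel)"
  unfolding DD_def using S_sets by auto

lemma kp_meas[measurable]: "kp p \<in> borel_measurable borel"
  unfolding kp_def by measurable

lemma ind_DD: "indicator (DD t) z = (if (fst z \<le> snd t \<and> snd t + fst t < snd z) \<or> (snd z \<le> snd t \<and> snd t + fst t < fst z) then 1 else 0)"
  by (simp add: DD_def indicator_def)

lemma meas_DD1: "(\<lambda>t. w (fst t) * indicator (DD t) z :: ennreal) \<in> borel_measurable (lborel \<Otimes>\<^sub>M lborel)"
  if [measurable]: "w \<in> borel_measurable borel" 
  unfolding ind_DD by measurable

lemma meas_DD2: "(\<lambda>(z,t). w (fst t) * indicator (DD t) z :: ennreal) \<in> borel_measurable ((borel \<Otimes>\<^sub>M borel) \<Otimes>\<^sub>M (lborel \<Otimes>\<^sub>M lborel))"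
  if [measurable]: "w \<in> borel_measurable borel" 
  unfolding ind_DD by measurable

lemma meas_DD3: "(\<lambda>(z,s). indicator (DD (0, s)) z :: ennreal) \<in> borel_measurable ((borel \<Otimes>\<^sub>M borel) \<Otimes>\<^sub>M lborel)"
  unfolding ind_DD prod.sel add_0_right by measurable

lemma DD_slice:
  assumes r: "0 \<le> r"
  shows "emeasure lborel {s. z \<in> DD (r, s)} = ennreal (max 0 (\<bar>fst z - snd z\<bar> - r))"
proof -
  obtain x y where z: "z = (x, y)" by (cases z)
  show ?thesis
  proof (cases "x \<le> y")
    case True
    then have "{s. z \<in> DD (r, s)} = {x ..< y - r}" using r by (auto simp: DD_def z)
    then show ?thesis using True by (cases "x \<le> y - r") (auto simp: z max_def)
  next
    case False
    then have "{s. z \<in> DD (r, s)} = {y ..< x - r}" using r by (auto simp: DD_def z)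
    then show ?thesis using False by (cases "y \<le> x - r") (auto simp: z max_def)
  qed
qed

lemma rep_gt1:
  assumes p: "1 < p"
  shows "ennreal (\<bar>fst z - snd z\<bar> powr p) = (\<integral>\<^sup>+ t. ennreal (kp p (fst t)) * indicator (DD t) z \<partial>(lborel \<Otimes>\<^sub>M lborel))"
proof -
  have m: "(\<lambda>t. ennreal (kp p (fst t)) * indicator (DD t) z) \<in> borel_measurable (lborel \<Otimes>\<^sub>M lborel)"
    by (rule meas_DD1) measurable
  have "(\<integral>\<^sup>+ t. ennreal (kp p (fst t)) * indicator (DD t) z \<partial>(lborel \<Otimes>\<^sub>M lborel))
     = (\<integral>\<^sup>+ r. \<integral>\<^sup>+ s. ennreal (kp p r) * indicator (DD (r, s)) z \<partial>lborel \<partial>lborel)"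
    using lborel.nn_integral_fst[OF m, symmetric] by simp
  also have "\<dots> = (\<integral>\<^sup>+ r. ennreal (kp p r * max 0 (\<bar>fst z - snd z\<bar> - r)) \<partial>lborel)"
  proof (rule nn_integral_cong)
    fix r :: real
    have "(\<integral>\<^sup>+ s. ennreal (kp p r) * indicator (DD (r, s)) z \<partial>lborel)
        = (\<integral>\<^sup>+ s. ennreal (kp p r) * indicator {s. z \<in> DD (r, s)} s \<partial>lborel)"
      by (simp add: indicator_def)
    also have "\<dots> = ennreal (kp p r) * emeasure lborel {s. z \<in> DD (r, s)}"
    proof (rule nn_integral_cmult_indicator)
      have "{s. z \<in> DD (r, s)} = {s\<in>space lborel. (fst z \<le> s \<and> s + r < snd z) \<or> (snd z \<le> s \<and> s + r < fst z)}"
        by (auto simp: DD_def)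
      also have "\<dots> \<in> sets lborel" by measurable
      finally show "{s. z \<in> DD (r, s)} \<in> sets lborel" .
    qed
    also have "\<dots> = ennreal (kp p r * max 0 (\<bar>fst z - snd z\<bar> - r))"
    proof (cases "0 < r")
      case True
      then show ?thesis using DD_slice[of r z] p by (simp add: ennreal_mult kp_nonneg)
    next
      case False
      then show ?thesis by (simp add: kp_def)
    qed
    finally show "(\<integral>\<^sup>+ s. ennreal (kp p r) * indicator (DD (r, s)) z \<partial>lborel) = ennreal (kp p r * max 0 (\<bar>fst z - snd z\<bar> - r))" .
  qed
  also have "\<dots> = ennreal (\<bar>fst z - snd z\<bar> powr p)"
    by (rule kernel_int[OF p]) simp
  finally show ?thesis by simp
qed

lemma rep_1:
  shows "ennreal (\<bar>fst z - snd z\<bar> powr 1) = (\<integral>\<^sup>+ s. 1 * indicator (DD (0, s)) z \<partial>lborel)"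
proof -
  have "(\<integral>\<^sup>+ s. 1 * indicator (DD (0, s)) z \<partial>lborel) = (\<integral>\<^sup>+ s. indicator {s. z \<in> DD (0, s)} s \<partial>lborel)"
    by (simp add: indicator_def)
  also have "\<dots> = emeasure lborel {s. z \<in> DD (0, s)}"
  proof (rule nn_integral_indicator)
    have "{s. z \<in> DD (0, s)} = {s\<in>space lborel. (fst z \<le> s \<and> s + 0 < snd z) \<or> (snd z \<le> s \<and> s + 0 < fst z)}"
      by (auto simp: DD_def)
    also have "\<dots> \<in> sets lborel" by measurable
    finally show "{s. z \<in> DD (0, s)} \<in> sets lborel" .
  qed
  also have "\<dots> = ennreal (\<bar>fst z - snd z\<bar>)"
    using DD_slice[of 0 z] by simp
  finally show ?thesis by simp
qed

lemma como_le_DD: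
  assumes "real_distribution \<nu>1" "real_distribution \<nu>2" "\<gamma> \<in> couplings \<nu>1 \<nu>2" "0 \<le> fst t"
  shows "emeasure (como \<nu>1 \<nu>2) (DD t) \<le> emeasure \<gamma> (DD t)"
proof -
  obtain r s where t: "t = (r, s)" by (cases t)
  have g: "prob_space \<gamma>" "sets \<gamma> = sets (borel \<Otimes>\<^sub>M borel)"
    using assms by (auto simp: couplings_def)
  have c: "sets (como \<nu>1 \<nu>2) = sets (borel \<Otimes>\<^sub>M borel)" by (simp add: como_def)
  let ?A = "{z. fst z \<le> s \<and> s + r < snd z}" and ?B = "{z. snd z \<le> s \<and> s + r < fst z}"
  have dis: "?A \<inter> ?B = {}" using assms(4) t by auto
  have DDe: "DD t = ?A \<union> ?B" by (simp add: DD_def t)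
  have sA: "?A \<in> sets (borel \<Otimes>\<^sub>M borel)" "?B \<in> sets (borel \<Otimes>\<^sub>M borel)" using S_sets by auto
  have "emeasure (como \<nu>1 \<nu>2) (DD t) = emeasure (como \<nu>1 \<nu>2) ?A + emeasure (como \<nu>1 \<nu>2) ?B"
    unfolding DDe using sA dis c by (intro plus_emeasure[symmetric]) auto
  also have "\<dots> \<le> emeasure \<gamma> ?A + emeasure \<gamma> ?B"
    by (intro add_mono como_le_coupling como_le_couplingB assms(1-3))
  also have "\<dots> = emeasure \<gamma> (DD t)"
    unfolding DDe using sA dis g by (intro plus_emeasure) auto
  finally show ?thesis .
qed

theorem como_optimal:
  assumes p: "1 \<le> p" and "real_distribution \<nu>1" "real_distribution \<nu>2" "\<gamma> \<in> couplings \<nu>1 \<nu>2"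
  shows "(\<integral>\<^sup>+ z. ennreal (\<bar>fst z - snd z\<bar> powr p) \<partial>como \<nu>1 \<nu>2) \<le> (\<integral>\<^sup>+ z. ennreal (\<bar>fst z - snd z\<bar> powr p) \<partial>\<gamma>)"
proof -
  have cc: "como \<nu>1 \<nu>2 \<in> couplings \<nu>1 \<nu>2" by (rule como_coupling[OF assms(2,3)])
  have g1: "prob_space (como \<nu>1 \<nu>2)" "sets (como \<nu>1 \<nu>2) = sets (borel \<Otimes>\<^sub>M borel)"
    using cc by (auto simp: couplings_def)
  have g2: "prob_space \<gamma>" "sets \<gamma> = sets (borel \<Otimes>\<^sub>M borel)"
    using assms(4) by (auto simp: couplings_def)
  show ?thesis
  proof (cases "p = 1")
    case True
    have N: "sigma_finite_measure (lborel :: real measure)" by (rule lborel.sigma_finite_measure_axioms)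
    show ?thesis unfolding True
      by (rule cost_mono[OF N g1 g2, where w = "\<lambda>_. 1" and D = "\<lambda>s. DD (0, s)"])
         (use meas_DD3 rep_1 como_le_DD[OF assms(2-4)] in auto)
  next
    case False
    with p have p1: "1 < p" by simp
    have N: "sigma_finite_measure (lborel \<Otimes>\<^sub>M lborel :: (real \<times> real) measure)"
      by (rule sigma_finite_pair_measure) (rule lborel.sigma_finite_measure_axioms)+
    show ?thesis
    proof (rule cost_mono[OF N g1 g2, where w = "\<lambda>t. ennreal (kp p (fst t))" and D = DD])
      show "(\<lambda>(z, t). ennreal (kp p (fst t)) * indicator (DD t) z) \<in> borel_measurable ((borel \<Otimes>\<^sub>M borel) \<Otimes>\<^sub>M (lborel \<Otimes>\<^sub>M lborel))"
        by (rule meas_DD2) measurable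
      show "\<And>z. ennreal (\<bar>fst z - snd z\<bar> powr p) = (\<integral>\<^sup>+ t. ennreal (kp p (fst t)) * indicator (DD t) z \<partial>(lborel \<Otimes>\<^sub>M lborel))"
        by (rule rep_gt1[OF p1])
      show "\<And>t. DD t \<in> sets (borel \<Otimes>\<^sub>M borel)" by (rule DD_sets)
      fix t :: "real \<times> real"
      assume "ennreal (kp p (fst t)) \<noteq> 0"
      then have "0 \<le> fst t" by (auto simp: kp_def split: if_splits)
      then show "emeasure (como \<nu>1 \<nu>2) (DD t) \<le> emeasure \<gamma> (DD t)"
        by (rule como_le_DD[OF assms(2-4)])
    qed
  qed
qed




lemma pw_convex:
  fixes p t u v :: real
  assumes p: "1 \<le> p" and t: "0 \<le> t" "t \<le> 1" and uv: "0 \<le> u" "0 \<le> v"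
  shows "((1 - t) * u + t * v) powr p \<le> (1 - t) * u powr p + t * v powr p"
proof -
  have aux: "s powr p \<le> s" if "0 \<le> s" "s \<le> 1" for s :: real
  proof (cases "s = 0")
    case False
    then have "s powr p \<le> s powr 1" using that p by (intro powr_mono') auto
    then show ?thesis using that by simp
  qed simp
  show ?thesis
  proof (cases "u = 0 \<or> v = 0")
    case True
    then show ?thesis
    proof
      assume u0: "u = 0"
      have "(t * v) powr p = t powr p * v powr p" using t uv by (simp add: powr_mult)
      also have "\<dots> \<le> t * v powr p" using aux[OF t] by (intro mult_right_mono) auto
      finally show ?thesis using u0 by simp
    next
      assume v0: "v = 0"
      have "((1 - t) * u) powr p = (1 - t) powr p * u powr p" using t uv by (simp add: powr_mult)
      also have "\<dots> \<le> (1 - t) * u powr p" using aux[of "1 - t"] t by (intro mult_right_mono) auto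
      finally show ?thesis using v0 by simp
    qed
  next
    case False
    then have "u \<in> {0<..}" "v \<in> {0<..}" using uv by auto
    from convex_onD[OF powr_convex[OF p] t this] show ?thesis by simp
  qed
qed

lemma pw_mink:
  fixes p a b x y :: real
  assumes p: "1 \<le> p" and a: "0 < a" and b: "0 < b"
  shows "\<bar>x + y\<bar> powr p \<le> ((a + b) powr p * (a / (a + b)) / a powr p) * \<bar>x\<bar> powr p
                         + ((a + b) powr p * (b / (a + b)) / b powr p) * \<bar>y\<bar> powr p"
proof -
  define t where "t = b / (a + b)"
  have t: "0 \<le> t" "t \<le> 1" "1 - t = a / (a + b)" using a b by (auto simp: t_def field_simps)
  have "\<bar>x + y\<bar> powr p \<le> (\<bar>x\<bar> + \<bar>y\<bar>) powr p"
    by (intro powr_mono2) (use p in auto)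
  also have "(\<bar>x\<bar> + \<bar>y\<bar>) = (a + b) * ((1 - t) * (\<bar>x\<bar> / a) + t * (\<bar>y\<bar> / b))"
  proof -
    have "(1 - t) * (\<bar>x\<bar> / a) = \<bar>x\<bar> / (a + b)" using t(3) a by simp
    moreover have "t * (\<bar>y\<bar> / b) = \<bar>y\<bar> / (a + b)" unfolding t_def using b by simp
    ultimately show ?thesis using a b by (simp add: add_divide_distrib[symmetric])
  qed
  also have "\<dots> powr p = (a + b) powr p * ((1 - t) * (\<bar>x\<bar> / a) + t * (\<bar>y\<bar> / b)) powr p"
    using a b t by (intro powr_mult)
  also have "\<dots> \<le> (a + b) powr p * ((1 - t) * (\<bar>x\<bar> / a) powr p + t * (\<bar>y\<bar> / b) powr p)"
    using a b by (intro mult_left_mono pw_convex[OF p t(1,2)]) auto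
  also have "\<dots> = ((a + b) powr p * (a / (a + b)) / a powr p) * \<bar>x\<bar> powr p
                         + ((a + b) powr p * (b / (a + b)) / b powr p) * \<bar>y\<bar> powr p"
    using a b by (simp add: t t_def powr_divide field_simps)
  finally show ?thesis .
qed

lemma minkowski_sum:
  fixes f g :: "nat \<Rightarrow> 'm \<Rightarrow> real" and c :: ennreal
  assumes p: "1 \<le> p" and a: "0 < a" and b: "0 < b"
    and mf: "\<And>k. f k \<in> borel_measurable M" and mg: "\<And>k. g k \<in> borel_measurable M"
    and Sf: "c * (\<Sum>k<K. \<integral>\<^sup>+ x. ennreal (\<bar>f k x\<bar> powr p) \<partial>M) \<le> ennreal (a powr p)"
    and Sg: "c * (\<Sum>k<K. \<integral>\<^sup>+ x. ennreal (\<bar>g k x\<bar> powr p) \<partial>M) \<le> ennreal (b powr p)"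
  shows "c * (\<Sum>k<K. \<integral>\<^sup>+ x. ennreal (\<bar>f k x + g k x\<bar> powr p) \<partial>M) \<le> ennreal ((a + b) powr p)"
proof -
  define \<alpha> where "\<alpha> = (a + b) powr p * (a / (a + b)) / a powr p"
  define \<beta> where "\<beta> = (a + b) powr p * (b / (a + b)) / b powr p"
  have \<alpha>\<beta>: "0 \<le> \<alpha>" "0 \<le> \<beta>" using a b by (auto simp: \<alpha>_def \<beta>_def)
  let ?X = "\<Sum>k<K. \<integral>\<^sup>+ x. ennreal (\<bar>f k x\<bar> powr p) \<partial>M"
  let ?Y = "\<Sum>k<K. \<integral>\<^sup>+ x. ennreal (\<bar>g k x\<bar> powr p) \<partial>M"
  have "(\<Sum>k<K. \<integral>\<^sup>+ x. ennreal (\<bar>f k x + g k x\<bar> powr p) \<partial>M)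
      \<le> (\<Sum>k<K. \<integral>\<^sup>+ x. ennreal \<alpha> * ennreal (\<bar>f k x\<bar> powr p) + ennreal \<beta> * ennreal (\<bar>g k x\<bar> powr p) \<partial>M)"
  proof (intro sum_mono nn_integral_mono)
    fix k x
    have "\<bar>f k x + g k x\<bar> powr p \<le> \<alpha> * \<bar>f k x\<bar> powr p + \<beta> * \<bar>g k x\<bar> powr p"
      unfolding \<alpha>_def \<beta>_def by (rule pw_mink[OF p a b])
    then show "ennreal (\<bar>f k x + g k x\<bar> powr p) \<le> ennreal \<alpha> * ennreal (\<bar>f k x\<bar> powr p) + ennreal \<beta> * ennreal (\<bar>g k x\<bar> powr p)"
      using \<alpha>\<beta> by (simp add: ennreal_mult[symmetric] ennreal_plus[symmetric] del: ennreal_plus)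
  qed
  also have "\<dots> = ennreal \<alpha> * ?X + ennreal \<beta> * ?Y"
    using mf mg
    by (simp add: nn_integral_add nn_integral_cmult sum.distrib sum_distrib_left)
  finally have Z: "(\<Sum>k<K. \<integral>\<^sup>+ x. ennreal (\<bar>f k x + g k x\<bar> powr p) \<partial>M) \<le> ennreal \<alpha> * ?X + ennreal \<beta> * ?Y" .
  have "c * (\<Sum>k<K. \<integral>\<^sup>+ x. ennreal (\<bar>f k x + g k x\<bar> powr p) \<partial>M) \<le> c * (ennreal \<alpha> * ?X + ennreal \<beta> * ?Y)"
    by (rule mult_left_mono[OF Z]) simp
  also have "\<dots> = ennreal \<alpha> * (c * ?X) + ennreal \<beta> * (c * ?Y)"
    by (simp add: algebra_simps)
  also have "\<dots> \<le> ennreal \<alpha> * ennreal (a powr p) + ennreal \<beta> * ennreal (b powr p)"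
    by (intro add_mono mult_left_mono Sf Sg) auto
  also have "\<dots> = ennreal (\<alpha> * a powr p + \<beta> * b powr p)"
  proof -
    have "ennreal \<alpha> * ennreal (a powr p) = ennreal (\<alpha> * a powr p)" using \<alpha>\<beta> by (simp add: ennreal_mult)
    moreover have "ennreal \<beta> * ennreal (b powr p) = ennreal (\<beta> * b powr p)" using \<alpha>\<beta> by (simp add: ennreal_mult)
    moreover have "ennreal (\<alpha> * a powr p) + ennreal (\<beta> * b powr p) = ennreal (\<alpha> * a powr p + \<beta> * b powr p)"
      using \<alpha>\<beta> by (intro ennreal_plus[symmetric]) auto
    ultimately show ?thesis by simp
  qed
  also have "\<alpha> * a powr p + \<beta> * b powr p = (a + b) powr p"
  proof -
    have "\<alpha> * a powr p = (a + b) powr p * (a / (a + b))" using a by (simp add: \<alpha>_def)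
    moreover have "\<beta> * b powr p = (a + b) powr p * (b / (a + b))" using b by (simp add: \<beta>_def)
    moreover have "a / (a + b) + b / (a + b) = 1" using a b by (simp add: add_divide_distrib[symmetric])
    ultimately show ?thesis by (metis distrib_left mult.right_neutral)
  qed
  finally show ?thesis .
qed




lemma cost_como:
  assumes "real_distribution \<nu>1" "real_distribution \<nu>2"
  shows "(\<integral>\<^sup>+ z. ennreal (\<bar>fst z - snd z\<bar> powr p) \<partial>como \<nu>1 \<nu>2)
       = (\<integral>\<^sup>+ u. ennreal (\<bar>qf \<nu>1 u - qf \<nu>2 u\<bar> powr p) \<partial>U01)"
  unfolding como_def using como_meas[OF assms] by (subst nn_integral_distr) auto

lemma Wpp_eq:
  assumes p: "1 \<le> p" and "real_distribution \<nu>1" "real_distribution \<nu>2"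
  shows "Wpp p \<nu>1 \<nu>2 = (\<integral>\<^sup>+ u. ennreal (\<bar>qf \<nu>1 u - qf \<nu>2 u\<bar> powr p) \<partial>U01)"
proof -
  have "Wpp p \<nu>1 \<nu>2 = (\<integral>\<^sup>+ z. ennreal (\<bar>fst z - snd z\<bar> powr p) \<partial>como \<nu>1 \<nu>2)"
    unfolding Wpp_def
  proof (rule antisym)
    show "(INF \<gamma>\<in>couplings \<nu>1 \<nu>2. \<integral>\<^sup>+ z. ennreal (\<bar>fst z - snd z\<bar> powr p) \<partial>\<gamma>)
        \<le> (\<integral>\<^sup>+ z. ennreal (\<bar>fst z - snd z\<bar> powr p) \<partial>como \<nu>1 \<nu>2)"
      by (rule INF_lower) (rule como_coupling[OF assms(2,3)])
    show "(\<integral>\<^sup>+ z. ennreal (\<bar>fst z - snd z\<bar> powr p) \<partial>como \<nu>1 \<nu>2)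
        \<le> (INF \<gamma>\<in>couplings \<nu>1 \<nu>2. \<integral>\<^sup>+ z. ennreal (\<bar>fst z - snd z\<bar> powr p) \<partial>\<gamma>)"
      by (rule INF_greatest) (rule como_optimal[OF assms])
  qed
  then show ?thesis using cost_como[OF assms(2,3)] by simp
qed

lemma Wpp_sym:
  assumes p: "1 \<le> p" and "real_distribution \<nu>1" "real_distribution \<nu>2"
  shows "Wpp p \<nu>1 \<nu>2 = Wpp p \<nu>2 \<nu>1"
  unfolding Wpp_eq[OF assms] Wpp_eq[OF assms(1,3,2)] by (simp add: abs_minus_commute)

lemma Wpp_self:
  assumes p: "1 \<le> p" and "real_distribution \<nu>"
  shows "Wpp p \<nu> \<nu> = 0"
  unfolding Wpp_eq[OF assms assms(2)] by simp

lemma Wpp_zero: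
  assumes p: "1 \<le> p" and d: "real_distribution \<nu>1" "real_distribution \<nu>2" and z: "Wpp p \<nu>1 \<nu>2 = 0"
  shows "\<nu>1 = \<nu>2"
proof -
  have m: "qf \<nu>1 \<in> borel_measurable U01" "qf \<nu>2 \<in> borel_measurable U01"
    using qf_measurable d by auto
  have "(\<integral>\<^sup>+ u. ennreal (\<bar>qf \<nu>1 u - qf \<nu>2 u\<bar> powr p) \<partial>U01) = 0"
    using z Wpp_eq[OF p d] by simp
  then have "AE u in U01. ennreal (\<bar>qf \<nu>1 u - qf \<nu>2 u\<bar> powr p) = 0"
    using m by (subst (asm) nn_integral_0_iff_AE) auto
  then have ae: "AE u in U01. qf \<nu>1 u = qf \<nu>2 u"
    by (rule AE_mp) (auto intro!: AE_I2)
  have "\<nu>1 = distr U01 borel (qf \<nu>1)" using distr_qf[OF d(1)] by simp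
  also have "\<dots> = distr U01 borel (qf \<nu>2)"
    by (rule distr_cong_AE[OF refl refl ae m])
  also have "\<dots> = \<nu>2" using distr_qf[OF d(2)] by simp
  finally show ?thesis .
qed

lemma moment_qf:
  assumes "real_distribution \<nu>"
  shows "(\<integral>\<^sup>+ u. ennreal (\<bar>qf \<nu> u\<bar> powr p) \<partial>U01) = (\<integral>\<^sup>+ x. ennreal (\<bar>x\<bar> powr p) \<partial>\<nu>)"
proof -
  have "(\<integral>\<^sup>+ x. ennreal (\<bar>x\<bar> powr p) \<partial>\<nu>) = (\<integral>\<^sup>+ x. ennreal (\<bar>x\<bar> powr p) \<partial>distr U01 borel (qf \<nu>))"
    using distr_qf[OF assms] by simp
  also have "\<dots> = (\<integral>\<^sup>+ u. ennreal (\<bar>qf \<nu> u\<bar> powr p) \<partial>U01)"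
    using qf_measurable[OF assms] by (subst nn_integral_distr) auto
  finally show ?thesis by simp
qed

lemma Wpp_finite:
  assumes p: "1 \<le> p" and d: "real_distribution \<nu>1" "real_distribution \<nu>2"
    and f1: "(\<integral>\<^sup>+ x. ennreal (\<bar>x\<bar> powr p) \<partial>\<nu>1) < \<infinity>"
    and f2: "(\<integral>\<^sup>+ x. ennreal (\<bar>x\<bar> powr p) \<partial>\<nu>2) < \<infinity>"
  shows "Wpp p \<nu>1 \<nu>2 < \<infinity>"
proof -
  define C where "C = (1 + 1) powr p * (1 / (1 + 1)) / 1 powr p"
  have C: "0 \<le> C" by (simp add: C_def)
  have pw: "\<bar>x - y\<bar> powr p \<le> C * \<bar>x\<bar> powr p + C * \<bar>y\<bar> powr p" for x y :: real
    using pw_mink[OF p, of 1 1 x "- y"] by (simp add: C_def)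
  have m: "qf \<nu>1 \<in> borel_measurable U01" "qf \<nu>2 \<in> borel_measurable U01"
    using qf_measurable d by auto
  have "Wpp p \<nu>1 \<nu>2 \<le> (\<integral>\<^sup>+ u. ennreal C * ennreal (\<bar>qf \<nu>1 u\<bar> powr p) + ennreal C * ennreal (\<bar>qf \<nu>2 u\<bar> powr p) \<partial>U01)"
    unfolding Wpp_eq[OF p d]
  proof (intro nn_integral_mono)
    fix u
    show "ennreal (\<bar>qf \<nu>1 u - qf \<nu>2 u\<bar> powr p) \<le> ennreal C * ennreal (\<bar>qf \<nu>1 u\<bar> powr p) + ennreal C * ennreal (\<bar>qf \<nu>2 u\<bar> powr p)"
      using pw[of "qf \<nu>1 u" "qf \<nu>2 u"] C
      by (simp add: ennreal_mult[symmetric] ennreal_plus[symmetric] del: ennreal_plus)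
  qed
  also have "\<dots> = ennreal C * (\<integral>\<^sup>+ x. ennreal (\<bar>x\<bar> powr p) \<partial>\<nu>1) + ennreal C * (\<integral>\<^sup>+ x. ennreal (\<bar>x\<bar> powr p) \<partial>\<nu>2)"
    using m by (simp add: nn_integral_add nn_integral_cmult moment_qf[OF d(1)] moment_qf[OF d(2)])
  also have "\<dots> < \<infinity>" using f1 f2 by (simp add: ennreal_mult_less_top)
  finally show ?thesis .
qed

lemma Wpp_bound:
  assumes p: "1 \<le> p" and d: "real_distribution \<nu>1" "real_distribution \<nu>2"
  shows "Wpp p \<nu>1 \<nu>2 \<le> ennreal (2 powr p) * ((\<integral>\<^sup>+ x. ennreal (\<bar>x\<bar> powr p) \<partial>\<nu>1) + (\<integral>\<^sup>+ x. ennreal (\<bar>x\<bar> powr p) \<partial>\<nu>2))"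
proof -
  define C where "C = (1 + 1) powr p * (1 / (1 + 1)) / 1 powr p"
  have C: "0 \<le> C" by (simp add: C_def)
  have pw: "\<bar>x - y\<bar> powr p \<le> C * \<bar>x\<bar> powr p + C * \<bar>y\<bar> powr p" for x y :: real
    using pw_mink[OF p, of 1 1 x "- y"] by (simp add: C_def)
  have m: "qf \<nu>1 \<in> borel_measurable U01" "qf \<nu>2 \<in> borel_measurable U01"
    using qf_measurable d by auto
  have "Wpp p \<nu>1 \<nu>2 \<le> (\<integral>\<^sup>+ u. ennreal C * ennreal (\<bar>qf \<nu>1 u\<bar> powr p) + ennreal C * ennreal (\<bar>qf \<nu>2 u\<bar> powr p) \<partial>U01)"
    unfolding Wpp_eq[OF p d]
  proof (intro nn_integral_mono)
    fix u
    show "ennreal (\<bar>qf \<nu>1 u - qf \<nu>2 u\<bar> powr p) \<le> ennreal C * ennreal (\<bar>qf \<nu>1 u\<bar> powr p) + ennreal C * ennreal (\<bar>qf \<nu>2 u\<bar> powr p)"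
      using pw[of "qf \<nu>1 u" "qf \<nu>2 u"] C
      by (simp add: ennreal_mult[symmetric] ennreal_plus[symmetric] del: ennreal_plus)
  qed
  also have "\<dots> = ennreal C * (\<integral>\<^sup>+ x. ennreal (\<bar>x\<bar> powr p) \<partial>\<nu>1) + ennreal C * (\<integral>\<^sup>+ x. ennreal (\<bar>x\<bar> powr p) \<partial>\<nu>2)"
    using m by (simp add: nn_integral_add nn_integral_cmult moment_qf[OF d(1)] moment_qf[OF d(2)])
  also have "\<dots> = ennreal C * ((\<integral>\<^sup>+ x. ennreal (\<bar>x\<bar> powr p) \<partial>\<nu>1) + (\<integral>\<^sup>+ x. ennreal (\<bar>x\<bar> powr p) \<partial>\<nu>2))"
    by (simp add: distrib_left)
  also have "\<dots> \<le> ennreal (2 powr p) * ((\<integral>\<^sup>+ x. ennreal (\<bar>x\<bar> powr p) \<partial>\<nu>1) + (\<integral>\<^sup>+ x. ennreal (\<bar>x\<bar> powr p) \<partial>\<nu>2))"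
  proof (intro mult_right_mono ennreal_leI)
    show "C \<le> 2 powr p" unfolding C_def by simp
  qed simp
  finally show ?thesis .
qed




lemma frame_exists:
  fixes u :: "'a::euclidean_space"
  assumes u: "norm u = 1" and K: "K \<le> DIM('a)"
  shows "\<exists>\<theta>. orthonormal_frame K \<theta> \<and> \<theta> 0 = u"
proof -
  obtain S where S: "u \<in> S" "pairwise orthogonal S" "\<And>x. x \<in> S \<Longrightarrow> norm x = 1" "card S = DIM('a)"
    by (rule vector_in_orthonormal_basis[OF u]) blast
  have fin: "finite S" using S(4) card_ge_0_finite[of S] by simp
  obtain g where g: "bij_betw g {0..<card (S - {u})} (S - {u})"
    using ex_bij_betw_nat_finite[of "S - {u}"] fin by blast
  have cS: "card (S - {u}) = DIM('a) - 1" using S(1,4) fin by simp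
  define \<theta> where "\<theta> i = (if i = 0 then u else g (i - 1))" for i
  have inS: "\<theta> i \<in> S" if "i < DIM('a)" for i
  proof (cases "i = 0")
    case False
    then have "i - 1 \<in> {0..<card (S - {u})}" using that cS by auto
    then show ?thesis using g False by (auto simp: \<theta>_def bij_betw_def)
  qed (use S(1) in \<open>simp add: \<theta>_def\<close>)
  have inj: "\<theta> i \<noteq> \<theta> j" if "i < DIM('a)" "j < DIM('a)" "i \<noteq> j" for i j
  proof -
    have gi: "g (k - 1) \<in> S - {u}" "k - 1 \<in> {0..<card (S - {u})}" if "k < DIM('a)" "k \<noteq> 0" for k
      using that g cS by (auto simp: bij_betw_def)
    show ?thesis
    proof (cases "i = 0 \<or> j = 0")
      case True
      then show ?thesis using that gi by (auto simp: \<theta>_def)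
    next
      case False
      then have "i - 1 \<noteq> j - 1" using that by auto
      have injg: "inj_on g {0..<card (S - {u})}" using g by (simp add: bij_betw_def)
      have "g (i - 1) \<noteq> g (j - 1)"
      proof
        assume "g (i - 1) = g (j - 1)"
        then have "i - 1 = j - 1"
          by (rule inj_onD[OF injg _ gi(2)[of i] gi(2)[of j]]) (use False that in auto)
        with \<open>i - 1 \<noteq> j - 1\<close> show False by simp
      qed
      then show ?thesis using False by (simp add: \<theta>_def)
    qed
  qed
  have "orthonormal_frame K \<theta>"
    unfolding orthonormal_frame_def
  proof (intro allI impI)
    fix i j assume ij: "i < K" "j < K"
    then have ij': "i < DIM('a)" "j < DIM('a)" using K by auto
    show "\<theta> i \<bullet> \<theta> j = (if i = j then 1 else 0)"
    proof (cases "i = j")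
      case True
      then show ?thesis using S(3)[OF inS[OF ij'(1)]] by (simp add: dot_square_norm)
    next
      case False
      then have "orthogonal (\<theta> i) (\<theta> j)"
        using S(2) inS[OF ij'(1)] inS[OF ij'(2)] inj[OF ij' False] by (auto simp: pairwise_def)
      then show ?thesis using False by (simp add: orthogonal_def)
    qed
  qed
  then show ?thesis by (auto simp: \<theta>_def)
qed




inductive_set trigs :: "('a::euclidean_space \<Rightarrow> real) set" where
  tcos: "(\<lambda>x. cos (x \<bullet> \<theta>)) \<in> trigs"
| tsin: "(\<lambda>x. sin (x \<bullet> \<theta>)) \<in> trigs"
| tadd: "f \<in> trigs \<Longrightarrow> g \<in> trigs \<Longrightarrow> (\<lambda>x. f x + g x) \<in> trigs"
| tscale: "f \<in> trigs \<Longrightarrow> (\<lambda>x. c * f x) \<in> trigs"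

lemma tconst: "(\<lambda>x. c) \<in> trigs"
  using tscale[OF tcos[of 0], of c] by simp

lemma tsum: "finite I \<Longrightarrow> (\<And>i. i \<in> I \<Longrightarrow> f i \<in> trigs) \<Longrightarrow> (\<lambda>x. \<Sum>i\<in>I. f i x) \<in> trigs"
proof (induction I rule: finite_induct)
  case empty then show ?case using tconst[of 0] by simp
next
  case (insert i I) then show ?case by (simp add: tadd)
qed

lemma tmult_base:
  assumes g: "g \<in> trigs" and b: "f = (\<lambda>x. cos (x \<bullet> \<theta>)) \<or> f = (\<lambda>x. sin (x \<bullet> \<theta>))"
  shows "(\<lambda>x. f x * g x) \<in> trigs"
  using g
proof induction
  case (tcos \<eta>)
  from b show ?case
  proof
    assume f: "f = (\<lambda>x. cos (x \<bullet> \<theta>))"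
    have "(\<lambda>x. f x * cos (x \<bullet> \<eta>)) = (\<lambda>x. (1/2) * cos (x \<bullet> (\<theta> - \<eta>)) + (1/2) * cos (x \<bullet> (\<theta> + \<eta>)))"
      by (simp add: f cos_times_cos inner_diff_right inner_add_right add_divide_distrib diff_divide_distrib)
    then show ?thesis by (simp only:) (intro tadd tscale trigs.tcos)
  next
    assume f: "f = (\<lambda>x. sin (x \<bullet> \<theta>))"
    have "(\<lambda>x. f x * cos (x \<bullet> \<eta>)) = (\<lambda>x. (1/2) * sin (x \<bullet> (\<theta> + \<eta>)) + (1/2) * sin (x \<bullet> (\<theta> - \<eta>)))"
      by (simp add: f sin_times_cos inner_diff_right inner_add_right add_divide_distrib diff_divide_distrib)
    then show ?thesis by (simp only:) (intro tadd tscale trigs.tsin)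
  qed
next
  case (tsin \<eta>)
  from b show ?case
  proof
    assume f: "f = (\<lambda>x. cos (x \<bullet> \<theta>))"
    have "(\<lambda>x. f x * sin (x \<bullet> \<eta>)) = (\<lambda>x. (1/2) * sin (x \<bullet> (\<theta> + \<eta>)) + (-1/2) * sin (x \<bullet> (\<theta> - \<eta>)))"
      by (simp add: f cos_times_sin inner_diff_right inner_add_right add_divide_distrib diff_divide_distrib)
    then show ?thesis by (simp only:) (intro tadd tscale trigs.tsin)
  next
    assume f: "f = (\<lambda>x. sin (x \<bullet> \<theta>))"
    have "(\<lambda>x. f x * sin (x \<bullet> \<eta>)) = (\<lambda>x. (1/2) * cos (x \<bullet> (\<theta> - \<eta>)) + (-1/2) * cos (x \<bullet> (\<theta> + \<eta>)))"
      by (simp add: f sin_times_sin inner_diff_right inner_add_right add_divide_distrib diff_divide_distrib)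
    then show ?thesis by (simp only:) (intro tadd tscale trigs.tcos)
  qed
next
  case (tadd g1 g2)
  have "(\<lambda>x. f x * (g1 x + g2 x)) = (\<lambda>x. f x * g1 x + f x * g2 x)" by (simp add: algebra_simps)
  then show ?case using tadd by (simp add: trigs.tadd)
next
  case (tscale g c)
  have "(\<lambda>x. f x * (c * g x)) = (\<lambda>x. c * (f x * g x))" by (simp add: algebra_simps)
  then show ?case using tscale by (simp add: trigs.tscale)
qed

lemma tmult:
  assumes f: "f \<in> trigs" and g: "g \<in> trigs"
  shows "(\<lambda>x. f x * g x) \<in> trigs"
  using f
proof induction
  case (tcos \<theta>) then show ?case using tmult_base[OF g] by blast
next
  case (tsin \<theta>) then show ?case using tmult_base[OF g] by blast
next
  case (tadd f1 f2)
  have "(\<lambda>x. (f1 x + f2 x) * g x) = (\<lambda>x. f1 x * g x + f2 x * g x)" by (simp add: algebra_simps)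
  then show ?case using tadd by (simp add: trigs.tadd)
next
  case (tscale f c)
  have "(\<lambda>x. (c * f x) * g x) = (\<lambda>x. c * (f x * g x))" by (simp add: algebra_simps)
  then show ?case using tscale by (simp add: trigs.tscale)
qed

lemma trigs_props:
  assumes "f \<in> trigs"
  shows "continuous_on UNIV f \<and> (\<exists>B. \<forall>x. \<bar>f x\<bar> \<le> B)"
  using assms
proof induction
  case (tcos \<theta>) then show ?case by (auto intro!: continuous_intros exI[of _ 1])
next
  case (tsin \<theta>) then show ?case by (auto intro!: continuous_intros exI[of _ 1])
next
  case (tadd f g)
  then obtain B1 B2 where B: "\<forall>x. \<bar>f x\<bar> \<le> B1" "\<forall>x. \<bar>g x\<bar> \<le> B2" by blast
  have "\<And>x. \<bar>f x + g x\<bar> \<le> B1 + B2"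
    by (rule order_trans[OF abs_triangle_ineq add_mono]) (use B in auto)
  then have "\<forall>x. \<bar>f x + g x\<bar> \<le> B1 + B2" by blast
  then show ?case using tadd by (auto intro!: continuous_intros)
next
  case (tscale f c)
  then obtain B where B: "\<forall>x. \<bar>f x\<bar> \<le> B" by blast
  then have "\<forall>x. \<bar>c * f x\<bar> \<le> \<bar>c\<bar> * B" by (simp add: abs_mult mult_left_mono)
  then show ?case using tscale by (auto intro!: continuous_intros)
qed

lemma bounded_cont_integrable:
  fixes \<mu> :: "'a::euclidean_space measure"
  assumes "prob_space \<mu>" "sets \<mu> = sets borel" "continuous_on UNIV f" "\<And>x. \<bar>f x :: real\<bar> \<le> B"
  shows "integrable \<mu> f"
proof -
  interpret prob_space \<mu> by fact
  have "f \<in> borel_measurable borel" using assms(3) by (rule borel_measurable_continuous_onI)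
  then have m: "f \<in> borel_measurable \<mu>" by (subst measurable_cong_sets[OF assms(2) refl])
  show ?thesis by (rule integrable_const_bound[of f B]) (use assms(4) m in auto)
qed

lemma slice_all:
  fixes \<mu>1 \<mu>2 :: "'a::euclidean_space measure"
  assumes s: "\<And>u. norm u = 1 \<Longrightarrow> slice \<mu>1 u = slice \<mu>2 u"
    and m: "sets \<mu>1 = sets borel" "sets \<mu>2 = sets borel"
  shows "distr \<mu>1 borel (\<lambda>x. x \<bullet> \<theta>) = distr \<mu>2 borel (\<lambda>x. x \<bullet> \<theta>)"
proof -
  obtain b :: 'a where b: "b \<in> Basis" using nonempty_Basis by blast
  define u where "u = (if \<theta> = 0 then b else \<theta> /\<^sub>R norm \<theta>)"
  have nu: "norm u = 1" using b by (auto simp: u_def)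
  have eq: "(\<lambda>x. x \<bullet> \<theta>) = (\<lambda>t. norm \<theta> * t) \<circ> (\<lambda>x. x \<bullet> u)"
    by (auto simp: u_def fun_eq_iff)
  have d: "distr \<mu> borel (\<lambda>x. x \<bullet> \<theta>) = distr (slice \<mu> u) borel (\<lambda>t. norm \<theta> * t)" if "sets \<mu> = sets borel" for \<mu> :: "'a measure"
  proof -
    have f: "(\<lambda>x. x \<bullet> u) \<in> \<mu> \<rightarrow>\<^sub>M borel" by (subst measurable_cong_sets[OF that refl]) simp
    show ?thesis unfolding slice_def eq using f by (subst distr_distr) auto
  qed
  show ?thesis using d[OF m(1)] d[OF m(2)] s[OF nu] by simp
qed

lemma trigs_int:
  fixes \<mu>1 \<mu>2 :: "'a::euclidean_space measure"
  assumes s: "\<And>u. norm u = 1 \<Longrightarrow> slice \<mu>1 u = slice \<mu>2 u"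
    and m: "prob_space \<mu>1" "sets \<mu>1 = sets borel" "prob_space \<mu>2" "sets \<mu>2 = sets borel"
    and f: "f \<in> trigs"
  shows "integral\<^sup>L \<mu>1 f = integral\<^sup>L \<mu>2 f"
  using f
proof induction
  case (tcos \<theta>)
  have "integral\<^sup>L \<mu> (\<lambda>x. cos (x \<bullet> \<theta>)) = integral\<^sup>L (distr \<mu> borel (\<lambda>x. x \<bullet> \<theta>)) cos" if "sets \<mu> = sets borel" for \<mu> :: "'a measure"
  proof -
    have f: "(\<lambda>x. x \<bullet> \<theta>) \<in> \<mu> \<rightarrow>\<^sub>M borel" by (subst measurable_cong_sets[OF that refl]) simp
    show ?thesis using f by (subst integral_distr) auto
  qed
  then show ?case using slice_all[OF s m(2) m(4), of \<theta>] m by simp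
next
  case (tsin \<theta>)
  have "integral\<^sup>L \<mu> (\<lambda>x. sin (x \<bullet> \<theta>)) = integral\<^sup>L (distr \<mu> borel (\<lambda>x. x \<bullet> \<theta>)) sin" if "sets \<mu> = sets borel" for \<mu> :: "'a measure"
  proof -
    have f: "(\<lambda>x. x \<bullet> \<theta>) \<in> \<mu> \<rightarrow>\<^sub>M borel" by (subst measurable_cong_sets[OF that refl]) simp
    show ?thesis using f by (subst integral_distr) auto
  qed
  then show ?case using slice_all[OF s m(2) m(4), of \<theta>] m by simp
next
  case (tadd f g)
  have i: "integrable \<mu> f" "integrable \<mu> g" if "prob_space \<mu>" "sets \<mu> = sets borel" for \<mu> :: "'a measure"
    using trigs_props[OF tadd.hyps(1)] trigs_props[OF tadd.hyps(2)] bounded_cont_integrable[OF that] by blast+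
  show ?case using tadd.IH i[OF m(1,2)] i[OF m(3,4)] by simp
next
  case (tscale f c)
  then show ?case by simp
qed




definition Phi :: "real \<Rightarrow> 'a::euclidean_space \<Rightarrow> 'a \<times> 'a" where
  "Phi c x = ((\<Sum>i\<in>Basis. cos (c * (x \<bullet> i)) *\<^sub>R i), (\<Sum>i\<in>Basis. sin (c * (x \<bullet> i)) *\<^sub>R i))"

lemma Phi_comp:
  assumes "i \<in> Basis"
  shows "fst (Phi c x) \<bullet> i = cos (c * (x \<bullet> i))" "snd (Phi c x) \<bullet> i = sin (c * (x \<bullet> i))"
  using assms by (simp_all add: Phi_def inner_sum_left inner_Basis if_distrib sum.delta cong: if_cong)

lemma linear_expand:
  fixes h :: "'a::euclidean_space \<Rightarrow> real"
  assumes "linear h"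
  shows "h y = (\<Sum>i\<in>Basis. (y \<bullet> i) * h i)"
proof -
  have "h y = h (\<Sum>i\<in>Basis. (y \<bullet> i) *\<^sub>R i)" by (simp add: euclidean_representation)
  also have "\<dots> = (\<Sum>i\<in>Basis. (y \<bullet> i) * h i)"
    using assms by (simp add: linear_sum linear_scale)
  finally show ?thesis .
qed

lemma poly_trigs:
  assumes "real_polynomial_function g"
  shows "(\<lambda>x. g (Phi c x :: 'a::euclidean_space \<times> 'a)) \<in> trigs"
  using assms
proof induction
  case (linear g)
  then have lg: "linear g" by (rule bounded_linear.linear)
  define h1 where "h1 y = g (y, 0)" for y :: 'a
  define h2 where "h2 y = g (0, y)" for y :: 'a
  have l1: "linear h1" unfolding h1_def
  proof (rule linearI)
    fix x y :: 'a and r :: real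
    show "g (x + y, 0) = g (x, 0) + g (y, 0)" using linear_add[OF lg, of "(x, 0)" "(y, 0)"] by simp
    show "g (r *\<^sub>R x, 0) = r *\<^sub>R g (x, 0)" using linear_scale[OF lg, of r "(x, 0)"] by simp
  qed
  have l2: "linear h2" unfolding h2_def
  proof (rule linearI)
    fix x y :: 'a and r :: real
    show "g (0, x + y) = g (0, x) + g (0, y)" using linear_add[OF lg, of "(0, x)" "(0, y)"] by simp
    show "g (0, r *\<^sub>R x) = r *\<^sub>R g (0, x)" using linear_scale[OF lg, of r "(0, x)"] by simp
  qed
  have split: "g y = h1 (fst y) + h2 (snd y)" for y
  proof -
    have "y = (fst y, 0) + (0, snd y)" by simp
    then have "g y = g ((fst y, 0) + (0, snd y))" by metis
    also have "\<dots> = g (fst y, 0) + g (0, snd y)" by (rule linear_add[OF lg])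
    finally show ?thesis unfolding h1_def h2_def .
  qed
  have eq: "(\<lambda>x. g (Phi c x)) = (\<lambda>x. (\<Sum>i\<in>Basis. h1 i * cos (x \<bullet> (c *\<^sub>R i))) + (\<Sum>i\<in>Basis. h2 i * sin (x \<bullet> (c *\<^sub>R i))))"
  proof
    fix x
    show "g (Phi c x) = (\<Sum>i\<in>Basis. h1 i * cos (x \<bullet> (c *\<^sub>R i))) + (\<Sum>i\<in>Basis. h2 i * sin (x \<bullet> (c *\<^sub>R i)))"
      unfolding split linear_expand[OF l1, of "fst (Phi c x)"] linear_expand[OF l2, of "snd (Phi c x)"]
      by (intro arg_cong2[where f="(+)"] sum.cong) (auto simp: Phi_comp mult.commute)
  qed
  show ?case unfolding eq
    by (intro tadd tsum finite_Basis tscale tcos tsin)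
next
  case (const c) then show ?case by (rule tconst)
next
  case (add f g) then show ?case by (intro tadd) auto
next
  case (mult f g) then show ?case by (intro tmult) auto
qed




lemma Phi_cont: "continuous_on UNIV (Phi c :: 'a::euclidean_space \<Rightarrow> 'a \<times> 'a)"
  unfolding Phi_def by (intro continuous_intros)

lemma Phi_in:
  fixes x :: "'a::euclidean_space"
  shows "Phi c x \<in> cball 0 (2 * real DIM('a))"
proof -
  have b: "norm (\<Sum>i\<in>Basis. f (c * (x \<bullet> i)) *\<^sub>R i) \<le> real DIM('a)" if f: "\<And>t. \<bar>f t\<bar> \<le> 1" for f :: "real \<Rightarrow> real"
  proof -
    have "norm (\<Sum>i\<in>Basis. f (c * (x \<bullet> i)) *\<^sub>R i) \<le> (\<Sum>i\<in>(Basis::'a set). norm (f (c * (x \<bullet> i)) *\<^sub>R i))"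
      by (rule norm_sum)
    also have "\<dots> \<le> (\<Sum>i\<in>(Basis::'a set). 1)"
      by (rule sum_mono) (simp add: f)
    finally have "norm (\<Sum>i\<in>Basis. f (c * (x \<bullet> i)) *\<^sub>R i) \<le> (\<Sum>i\<in>(Basis::'a set). 1)" .
    then show ?thesis by simp
  qed
  have "norm (Phi c x) \<le> norm (fst (Phi c x)) + norm (snd (Phi c x))"
    by (metis norm_Pair_le prod.collapse)
  also have "\<dots> \<le> real DIM('a) + real DIM('a)"
    unfolding Phi_def fst_conv snd_conv by (intro add_mono b) auto
  finally show ?thesis by simp
qed

locale cw_setup =
  fixes \<mu>1 \<mu>2 :: "'a::euclidean_space measure"
  assumes s: "\<And>u. norm u = 1 \<Longrightarrow> slice \<mu>1 u = slice \<mu>2 u"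
    and p1: "prob_space \<mu>1" and e1: "sets \<mu>1 = sets borel"
    and p2: "prob_space \<mu>2" and e2: "sets \<mu>2 = sets borel"
begin

lemma trig_eq: "f \<in> trigs \<Longrightarrow> integral\<^sup>L \<mu>1 f = integral\<^sup>L \<mu>2 f"
  by (rule trigs_int[OF s p1 e1 p2 e2])

lemma cont_int:
  fixes F :: "'a \<times> 'a \<Rightarrow> real"
  assumes F: "continuous_on UNIV F"
  shows "(\<integral>x. F (Phi c x) \<partial>\<mu>1) = (\<integral>x. F (Phi c x) \<partial>\<mu>2)"
proof -
  let ?S = "cball (0 :: 'a \<times> 'a) (2 * real DIM('a))"
  have cS: "compact ?S" by simp
  have FS: "continuous_on ?S F" using F by (rule continuous_on_subset) simp
  have "bounded (F ` ?S)" by (rule compact_imp_bounded[OF compact_continuous_image[OF FS cS]])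
  then obtain B where B0: "\<forall>z\<in>F ` ?S. norm z \<le> B" by (auto simp: bounded_iff)
  have B: "\<And>y. y \<in> ?S \<Longrightarrow> \<bar>F y\<bar> \<le> B" using B0 by auto
  have FP: "continuous_on UNIV (\<lambda>x. F (Phi c x))"
    using continuous_on_compose2[OF F Phi_cont] by simp
  have intF: "integrable \<mu> (\<lambda>x. F (Phi c x))" if "prob_space \<mu>" "sets \<mu> = sets borel" for \<mu>
    by (rule bounded_cont_integrable[OF that FP, of B]) (rule B[OF Phi_in])
  have close: "\<bar>(\<integral>x. F (Phi c x) \<partial>\<mu>1) - (\<integral>x. F (Phi c x) \<partial>\<mu>2)\<bar> \<le> 2 * e" if e: "0 < e" for e
  proof -
    obtain g where g: "real_polynomial_function g" "\<And>y. y \<in> ?S \<Longrightarrow> \<bar>F y - g y\<bar> < e"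
      by (rule Stone_Weierstrass_real_polynomial_function[OF cS FS e]) blast
    have gt: "(\<lambda>x. g (Phi c x)) \<in> trigs" by (rule poly_trigs[OF g(1)])
    have intg: "integrable \<mu> (\<lambda>x. g (Phi c x))" if "prob_space \<mu>" "sets \<mu> = sets borel" for \<mu>
      using trigs_props[OF gt] bounded_cont_integrable[OF that] by blast
    have near: "\<bar>(\<integral>x. F (Phi c x) \<partial>\<mu>) - (\<integral>x. g (Phi c x) \<partial>\<mu>)\<bar> \<le> e" if "prob_space \<mu>" "sets \<mu> = sets borel" for \<mu>
    proof -
      interpret prob_space \<mu> by fact
      have "(\<integral>x. F (Phi c x) \<partial>\<mu>) - (\<integral>x. g (Phi c x) \<partial>\<mu>) = (\<integral>x. F (Phi c x) - g (Phi c x) \<partial>\<mu>)"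
        using intF[OF that] intg[OF that] by simp
      also have "\<bar>\<dots>\<bar> \<le> (\<integral>x. \<bar>F (Phi c x) - g (Phi c x)\<bar> \<partial>\<mu>)"
        using integral_norm_bound[of \<mu> "\<lambda>x. F (Phi c x) - g (Phi c x)"] by simp
      also have "\<dots> \<le> (\<integral>x. e \<partial>\<mu>)"
        using intF[OF that] intg[OF that] g(2)[OF Phi_in]
        by (intro integral_mono) (auto intro: less_imp_le)
      also have "\<dots> = e" by (simp add: prob_space)
      finally show ?thesis .
    qed
    have "(\<integral>x. g (Phi c x) \<partial>\<mu>1) = (\<integral>x. g (Phi c x) \<partial>\<mu>2)" by (rule trig_eq[OF gt])
    then show ?thesis using near[OF p1 e1] near[OF p2 e2] by linarith
  qed
  show ?thesis
  proof (rule ccontr)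
    assume ne: "(\<integral>x. F (Phi c x) \<partial>\<mu>1) \<noteq> (\<integral>x. F (Phi c x) \<partial>\<mu>2)"
    define d where "d = \<bar>(\<integral>x. F (Phi c x) \<partial>\<mu>1) - (\<integral>x. F (Phi c x) \<partial>\<mu>2)\<bar>"
    have "0 < d" using ne by (simp add: d_def)
    then show False using close[of "d / 4"] by (simp add: d_def)
  qed
qed

lemma sp: "space \<mu>1 = UNIV" "space \<mu>2 = UNIV"
  using sets_eq_imp_space_eq[OF e1] sets_eq_imp_space_eq[OF e2] by auto

lemma open_pre:
  assumes V: "open V"
  shows "emeasure \<mu>1 (Phi c -` V) = emeasure \<mu>2 (Phi c -` V)"
proof (cases "V = UNIV")
  case True
  interpret P1: prob_space \<mu>1 by (rule p1)
  interpret P2: prob_space \<mu>2 by (rule p2)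
  show ?thesis using True P1.emeasure_space_1 P2.emeasure_space_1 sp by simp
next
  case False
  let ?C = "- V"
  have C: "closed ?C" "?C \<noteq> {}" using V False by auto
  let ?A = "Phi c -` V"
  have Pm: "Phi c \<in> borel_measurable borel"
    by (rule borel_measurable_continuous_onI[OF Phi_cont])
  have Aset: "?A \<in> sets borel"
  proof -
    have "?A = Phi c -` V \<inter> space borel" by simp
    also have "\<dots> \<in> sets borel" using Pm V by (intro measurable_sets) auto
    finally show ?thesis .
  qed
  define F where "F n y = min 1 (real n * infdist y ?C)" for n :: nat and y :: "'a \<times> 'a"
  have Fc: "continuous_on UNIV (F n)" for n
    unfolding F_def by (intro continuous_intros)
  have lim: "(\<lambda>n. F n (Phi c x)) \<longlonglongrightarrow> indicator ?A x" for x
  proof (cases "Phi c x \<in> V")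
    case True
    then have "Phi c x \<notin> ?C" by simp
    then have "infdist (Phi c x) ?C \<noteq> 0"
      using in_closed_iff_infdist_zero[OF C, of "Phi c x"] by simp
    then have d: "0 < infdist (Phi c x) ?C"
      using infdist_nonneg[of "Phi c x" ?C] by (simp add: less_le)
    obtain N :: nat where N: "1 / infdist (Phi c x) ?C < N" using reals_Archimedean2 by blast
    have "eventually (\<lambda>n. F n (Phi c x) = 1) sequentially"
      unfolding eventually_sequentially
    proof (intro exI allI impI)
      fix n assume "N \<le> n"
      then have "1 / infdist (Phi c x) ?C < real n" using N by linarith
      then have "1 \<le> real n * infdist (Phi c x) ?C" using d by (simp add: field_simps)
      then show "F n (Phi c x) = 1" by (simp add: F_def)
    qed
    then show ?thesis using True by (simp add: tendsto_eventually)
  next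
    case False
    then have "infdist (Phi c x) ?C = 0" using in_closed_iff_infdist_zero[OF C] by simp
    then show ?thesis using False by (simp add: F_def)
  qed
  have conv: "(\<lambda>n. \<integral>x. F n (Phi c x) \<partial>\<mu>) \<longlonglongrightarrow> measure \<mu> ?A" if "prob_space \<mu>" "sets \<mu> = sets borel" for \<mu>
  proof -
    interpret prob_space \<mu> by fact
    have spu: "space \<mu> = UNIV" using sets_eq_imp_space_eq[OF that(2)] by simp
    have m: "(\<lambda>x. F n (Phi c x)) \<in> borel_measurable \<mu>" for n
      by (subst measurable_cong_sets[OF that(2) refl])
         (rule borel_measurable_continuous_onI, rule continuous_on_compose2[OF Fc Phi_cont], simp)
    have mi: "indicator ?A \<in> borel_measurable \<mu>"
      using Aset that(2) by (subst measurable_cong_sets[OF that(2) refl]) simp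
    have "(\<lambda>n. \<integral>x. F n (Phi c x) \<partial>\<mu>) \<longlonglongrightarrow> integral\<^sup>L \<mu> (indicator ?A :: _ \<Rightarrow> real)"
    proof (rule integral_dominated_convergence[where w = "\<lambda>_. 1"])
      show "\<And>n. AE x in \<mu>. norm (F n (Phi c x)) \<le> 1"
        by (auto simp: F_def infdist_nonneg)
    qed (use m mi lim in auto)
    then show ?thesis by (simp add: spu)
  qed
  have "measure \<mu>1 ?A = measure \<mu>2 ?A"
    using LIMSEQ_unique[OF conv[OF p1 e1]] conv[OF p2 e2] cont_int[OF Fc] by simp
  interpret P1: prob_space \<mu>1 by (rule p1)
  interpret P2: prob_space \<mu>2 by (rule p2)
  from \<open>measure \<mu>1 ?A = measure \<mu>2 ?A\<close> show ?thesis by (simp add: P1.emeasure_eq_measure P2.emeasure_eq_measure)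
qed

end




lemma cos_gt:
  fixes t \<alpha> :: real
  assumes "\<bar>t\<bar> < \<alpha>" "\<alpha> \<le> pi"
  shows "cos \<alpha> < cos t"
proof -
  have "cos \<alpha> < cos \<bar>t\<bar>" using assms by (intro cos_monotone_0_pi) auto
  then show ?thesis by simp
qed

lemma cos_gt_rev:
  fixes t \<alpha> :: real
  assumes t: "\<bar>t\<bar> < 2 * pi" and a: "0 < \<alpha>" "\<alpha> < pi" and c: "cos \<alpha> < cos t"
  shows "\<bar>t\<bar> < \<alpha> \<or> 2 * pi - \<alpha> < \<bar>t\<bar>"
proof (cases "\<bar>t\<bar> \<le> pi")
  case True
  show ?thesis
  proof (rule ccontr)
    assume "\<not> ?thesis"
    then have "\<alpha> \<le> \<bar>t\<bar>" by simp
    then have "cos \<bar>t\<bar> \<le> cos \<alpha>" using True a by (intro cos_monotone_0_pi_le) auto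
    then show False using c by simp
  qed
next
  case False
  have eq: "cos (2 * pi - \<bar>t\<bar>) = cos t" by (simp add: cos_diff)
  show ?thesis
  proof (rule ccontr)
    assume "\<not> ?thesis"
    then have "\<alpha> \<le> 2 * pi - \<bar>t\<bar>" by simp
    then have "cos (2 * pi - \<bar>t\<bar>) \<le> cos \<alpha>" using False a t by (intro cos_monotone_0_pi_le) auto
    then show False using c eq by simp
  qed
qed

lemma cos_box1:
  fixes A B X :: real
  assumes "A < X" "X < B" "- pi < A" "B < pi"
  shows "cos ((B - A) / 2) < cos (X - (A + B) / 2)"
proof (rule cos_gt)
  show "\<bar>X - (A + B) / 2\<bar> < (B - A) / 2" unfolding abs_less_iff using assms by argo
  show "(B - A) / 2 \<le> pi" using assms by argo
qed

lemma cos_box2: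
  fixes A B X :: real
  assumes "A < B" "- pi < A" "B < pi" "- pi < X" "X < pi" "cos ((B - A) / 2) < cos (X - (A + B) / 2)"
  shows "A < X \<and> X < B"
proof -
  have "\<bar>X - (A + B) / 2\<bar> < (B - A) / 2 \<or> 2 * pi - (B - A) / 2 < \<bar>X - (A + B) / 2\<bar>"
  proof (rule cos_gt_rev)
    show "\<bar>X - (A + B) / 2\<bar> < 2 * pi" unfolding abs_less_iff using assms by argo
  qed (use assms in auto)
  then show ?thesis using assms(1-5) by argo
qed




context cw_setup begin

definition cube :: "nat \<Rightarrow> 'a set" where
  "cube n = box (- (real n *\<^sub>R One)) (real n *\<^sub>R One)"

lemma mem_cube: "x \<in> cube n \<longleftrightarrow> (\<forall>i\<in>Basis. - real n < x \<bullet> i \<and> x \<bullet> i < real n)"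
  by (simp add: cube_def mem_box)

lemma compl_cube_lim:
  assumes "prob_space \<mu>" "sets \<mu> = sets borel"
  shows "(\<lambda>n. measure \<mu> (- cube n)) \<longlonglongrightarrow> 0"
proof -
  interpret prob_space \<mu> by fact
  have spu: "space \<mu> = UNIV" using sets_eq_imp_space_eq[OF assms(2)] by simp
  have ev: "cube n \<in> sets \<mu>" for n using assms(2) by (simp add: cube_def)
  have inc: "incseq cube"
    unfolding incseq_def by (auto simp: mem_cube subset_eq) (smt (verit) of_nat_mono)+
  have "(\<lambda>n. measure \<mu> (cube n)) \<longlonglongrightarrow> measure \<mu> (\<Union>n. cube n)"
    using ev inc by (intro finite_Lim_measure_incseq) auto
  also have "(\<Union>n. cube n) = UNIV" unfolding cube_def by (rule UN_box_eq_UNIV)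
  finally have "(\<lambda>n. measure \<mu> (cube n)) \<longlonglongrightarrow> 1" using prob_space spu by simp
  then have "(\<lambda>n. 1 - measure \<mu> (cube n)) \<longlonglongrightarrow> 1 - 1" by (intro tendsto_diff tendsto_const)
  moreover have "measure \<mu> (- cube n) = 1 - measure \<mu> (cube n)" for n
    using prob_compl[OF ev[of n]] spu by (simp add: Compl_eq_Diff_UNIV)
  ultimately show ?thesis by simp
qed

lemma box_key:
  fixes a b :: 'a and n :: nat
  assumes ab: "\<forall>i\<in>Basis. a \<bullet> i < b \<bullet> i" and n: "norm a + norm b < real n"
  shows "measure \<mu>1 (box a b) \<le> measure \<mu>2 (box a b) + measure \<mu>2 (- cube n)"
proof -
  define L where "L = real n"
  have L: "0 < L" using n unfolding L_def by (smt (verit) norm_ge_zero)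
  define c where "c = pi / L"
  have c: "0 < c" "c * L = pi" using L by (auto simp: c_def)
  define V where "V = (\<Inter>i\<in>Basis. {y :: 'a \<times> 'a. cos ((c * (b \<bullet> i) - c * (a \<bullet> i)) / 2)
      < fst y \<bullet> i * cos ((c * (a \<bullet> i) + c * (b \<bullet> i)) / 2) + snd y \<bullet> i * sin ((c * (a \<bullet> i) + c * (b \<bullet> i)) / 2)})"
  have Vo: "open V" unfolding V_def
    by (intro open_INT ballI finite_Basis open_Collect_less continuous_intros)
  have memP: "x \<in> Phi c -` V \<longleftrightarrow> (\<forall>i\<in>Basis. cos ((c * (b \<bullet> i) - c * (a \<bullet> i)) / 2) < cos (c * (x \<bullet> i) - (c * (a \<bullet> i) + c * (b \<bullet> i)) / 2))" for x
    unfolding V_def by (auto simp: Phi_comp cos_diff)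
  have bnd: "- pi < c * (y \<bullet> i) \<and> c * (y \<bullet> i) < pi" if "i \<in> Basis" "\<bar>y \<bullet> i\<bar> < L" for y i
  proof -
    have "c * \<bar>y \<bullet> i\<bar> < c * L" using that c by (intro mult_strict_left_mono) auto
    then have "\<bar>c * (y \<bullet> i)\<bar> < pi" using c by (simp add: abs_mult)
    then show ?thesis by argo
  qed
  have aL: "\<bar>a \<bullet> i\<bar> < L" "\<bar>b \<bullet> i\<bar> < L" if "i \<in> Basis" for i
    using Basis_le_norm[OF that, of a] Basis_le_norm[OF that, of b] n norm_ge_zero[of a] norm_ge_zero[of b]
    unfolding L_def by linarith+
  have sub1: "box a b \<subseteq> Phi c -` V"
  proof
    fix x assume x: "x \<in> box a b"
    show "x \<in> Phi c -` V" unfolding memP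
    proof
      fix i :: 'a assume i: "i \<in> Basis"
      have "a \<bullet> i < x \<bullet> i" "x \<bullet> i < b \<bullet> i" using x i by (auto simp: mem_box)
      then have "c * (a \<bullet> i) < c * (x \<bullet> i)" "c * (x \<bullet> i) < c * (b \<bullet> i)" using c by auto
      then show "cos ((c * (b \<bullet> i) - c * (a \<bullet> i)) / 2) < cos (c * (x \<bullet> i) - (c * (a \<bullet> i) + c * (b \<bullet> i)) / 2)"
        using bnd[OF i aL(1)[OF i]] bnd[OF i aL(2)[OF i]] by (intro cos_box1) auto
    qed
  qed
  have sub2: "Phi c -` V \<subseteq> box a b \<union> - cube n"
  proof
    fix x assume x0: "x \<in> Phi c -` V"
    have x: "\<forall>i\<in>Basis. cos ((c * (b \<bullet> i) - c * (a \<bullet> i)) / 2) < cos (c * (x \<bullet> i) - (c * (a \<bullet> i) + c * (b \<bullet> i)) / 2)"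
      using x0 memP by blast
    show "x \<in> box a b \<union> - cube n"
    proof (cases "x \<in> cube n")
      case True
      have "a \<bullet> i < x \<bullet> i \<and> x \<bullet> i < b \<bullet> i" if i: "i \<in> Basis" for i
      proof -
        have xl: "\<bar>x \<bullet> i\<bar> < L" using True i by (auto simp: mem_cube L_def)
        have "c * (a \<bullet> i) < c * (b \<bullet> i)" using ab i c by auto
        then have "c * (a \<bullet> i) < c * (x \<bullet> i) \<and> c * (x \<bullet> i) < c * (b \<bullet> i)"
          using bnd[OF i aL(1)[OF i]] bnd[OF i aL(2)[OF i]] bnd[OF i xl] x i
          by (intro cos_box2) auto
        then show ?thesis using c by auto
      qed
      then show ?thesis by (simp add: mem_box)
    qed simp
  qed
  have sets: "box a b \<in> sets borel" "cube n \<in> sets borel" "Phi c -` V \<in> sets borel"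
  proof -
    have "continuous_on UNIV (Phi c :: 'a \<Rightarrow> 'a \<times> 'a)" by (rule Phi_cont)
    then have "open (Phi c -` V)" using Vo by (simp add: continuous_on_open_vimage)
    then show "box a b \<in> sets borel" "cube n \<in> sets borel" "Phi c -` V \<in> sets borel"
      by (auto simp: cube_def)
  qed
  interpret P1: prob_space \<mu>1 by (rule p1)
  interpret P2: prob_space \<mu>2 by (rule p2)
  have "measure \<mu>1 (box a b) \<le> measure \<mu>1 (Phi c -` V)"
    using sub1 sets e1 by (intro P1.finite_measure_mono) auto
  also have "\<dots> = measure \<mu>2 (Phi c -` V)"
    using open_pre[OF Vo, of c] by (simp add: P1.emeasure_eq_measure P2.emeasure_eq_measure)
  also have "\<dots> \<le> measure \<mu>2 (box a b \<union> - cube n)"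
    using sub2 sets e2 by (intro P2.finite_measure_mono) auto
  also have "\<dots> \<le> measure \<mu>2 (box a b) + measure \<mu>2 (- cube n)"
    using sets e2 by (intro measure_Un_le) auto
  finally show ?thesis .
qed

end




context cw_setup begin

lemma box_le:
  assumes ab: "\<forall>i\<in>Basis. a \<bullet> i < b \<bullet> i"
  shows "measure \<mu>1 (box a b) \<le> measure \<mu>2 (box a b)"
proof -
  obtain N :: nat where N: "norm a + norm b < N" using reals_Archimedean2 by blast
  have ev: "eventually (\<lambda>n. measure \<mu>1 (box a b) \<le> measure \<mu>2 (box a b) + measure \<mu>2 (- cube n)) sequentially"
    unfolding eventually_sequentially
  proof (intro exI allI impI)
    fix n assume "N \<le> n"
    then have "norm a + norm b < real n" using N by (meson less_le_trans of_nat_le_iff)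
    then show "measure \<mu>1 (box a b) \<le> measure \<mu>2 (box a b) + measure \<mu>2 (- cube n)"
      by (rule box_key[OF ab])
  qed
  have lim: "(\<lambda>n. measure \<mu>2 (box a b) + measure \<mu>2 (- cube n)) \<longlonglongrightarrow> measure \<mu>2 (box a b) + 0"
    by (intro tendsto_add tendsto_const compl_cube_lim[OF p2 e2])
  show ?thesis using tendsto_le[OF trivial_limit_sequentially lim tendsto_const ev] by simp
qed

end

lemma cw_sym:
  assumes "cw_setup \<mu>1 \<mu>2" shows "cw_setup \<mu>2 \<mu>1"
proof -
  interpret cw_setup \<mu>1 \<mu>2 by fact
  show ?thesis
  proof (rule cw_setup.intro)
    fix u :: 'a assume "norm u = 1"
    then show "slice \<mu>2 u = slice \<mu>1 u" using s by simp
  qed (fact p1 p2 e1 e2)+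
qed

lemma cramer_wold:
  fixes \<mu>1 \<mu>2 :: "'a::euclidean_space measure"
  assumes "prob_space \<mu>1" "sets \<mu>1 = sets borel" "prob_space \<mu>2" "sets \<mu>2 = sets borel"
    and "\<And>u. norm u = 1 \<Longrightarrow> slice \<mu>1 u = slice \<mu>2 u"
  shows "\<mu>1 = \<mu>2"
proof -
  interpret A: cw_setup \<mu>1 \<mu>2 unfolding cw_setup_def using assms by blast
  interpret B: cw_setup \<mu>2 \<mu>1 by (rule cw_sym) (rule A.cw_setup_axioms)
  interpret P1: prob_space \<mu>1 by fact
  interpret P2: prob_space \<mu>2 by fact
  have boxeq: "emeasure \<mu>1 (box a b) = emeasure \<mu>2 (box a b)" for a b :: 'a
  proof (cases "\<forall>i\<in>Basis. a \<bullet> i < b \<bullet> i")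
    case True
    have "measure \<mu>1 (box a b) = measure \<mu>2 (box a b)"
      using A.box_le[OF True] B.box_le[OF True] by simp
    then show ?thesis by (simp add: P1.emeasure_eq_measure P2.emeasure_eq_measure)
  next
    case False
    then have "box a b = {}" using box_ne_empty(2)[of a b] by blast
    then show ?thesis by simp
  qed
  show ?thesis
  proof (rule measure_eqI_generator_eq)
    let ?E = "range (\<lambda>(a, b). box a b::'a set)"
    show "Int_stable ?E"
      by (auto simp: Int_stable_def box_Int_box)
    show "?E \<subseteq> Pow UNIV" "sets \<mu>1 = sigma_sets UNIV ?E" "sets \<mu>2 = sigma_sets UNIV ?E"
      by (simp_all add: borel_eq_box assms(2,4))
    let ?A = "\<lambda>n::nat. box (- (real n *\<^sub>R One)) (real n *\<^sub>R One) :: 'a set"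
    show "range ?A \<subseteq> ?E" "(\<Union>i. ?A i) = UNIV"
      unfolding UN_box_eq_UNIV by auto
    show "emeasure \<mu>1 (?A i) \<noteq> \<infinity>" for i by (simp add: P1.emeasure_eq_measure)
    show "emeasure \<mu>1 X = emeasure \<mu>2 X" if "X \<in> ?E" for X
      using that boxeq by auto
  qed
qed




lemma slice_rd:
  assumes "\<mu> \<in> P_p p"
  shows "real_distribution (slice \<mu> \<theta>)"
proof -
  have m: "prob_space \<mu>" "sets \<mu> = sets borel" using assms by (auto simp: P_p_def)
  interpret prob_space \<mu> by fact
  have f: "(\<lambda>x. x \<bullet> \<theta>) \<in> \<mu> \<rightarrow>\<^sub>M borel"
    by (subst measurable_cong_sets[OF m(2) refl]) simp
  show ?thesis unfolding real_distribution_def real_distribution_axioms_def slice_def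
    using prob_space_distr[OF f] by simp
qed

lemma frame_norm:
  assumes "orthonormal_frame K \<theta>" "k < K"
  shows "norm (\<theta> k) = 1"
  using assms unfolding orthonormal_frame_def by (simp add: norm_eq_sqrt_inner)

lemma slice_moment:
  assumes "\<mu> \<in> P_p p" "norm \<theta> = 1" "0 \<le> p"
  shows "(\<integral>\<^sup>+ x. ennreal (\<bar>x\<bar> powr p) \<partial>slice \<mu> \<theta>) \<le> (\<integral>\<^sup>+ x. ennreal (norm x powr p) \<partial>\<mu>)"
proof -
  have m: "prob_space \<mu>" "sets \<mu> = sets borel" using assms by (auto simp: P_p_def)
  have f: "(\<lambda>x. x \<bullet> \<theta>) \<in> \<mu> \<rightarrow>\<^sub>M borel"
    by (subst measurable_cong_sets[OF m(2) refl]) simp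
  have "(\<integral>\<^sup>+ x. ennreal (\<bar>x\<bar> powr p) \<partial>slice \<mu> \<theta>) = (\<integral>\<^sup>+ x. ennreal (\<bar>x \<bullet> \<theta>\<bar> powr p) \<partial>\<mu>)"
    unfolding slice_def using f by (subst nn_integral_distr) auto
  also have "\<dots> \<le> (\<integral>\<^sup>+ x. ennreal (norm x powr p) \<partial>\<mu>)"
  proof (intro nn_integral_mono ennreal_leI powr_mono2)
    fix x :: 'a
    show "\<bar>x \<bullet> \<theta>\<bar> \<le> norm x" using Cauchy_Schwarz_ineq2[of x \<theta>] assms(2) by simp
  qed (use assms in auto)
  finally show ?thesis .
qed

lemma enn_root_fin: "x \<noteq> \<infinity> \<Longrightarrow> enn_root p x = ennreal (enn2real x powr (1 / p))"
  by (simp add: enn_root_def)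

lemma enn_root_zero: "enn_root p 0 = 0"
  by (simp add: enn_root_def)

lemma enn_root_eq0:
  assumes "enn_root p x = 0" shows "x = 0"
proof -
  have "x \<noteq> \<infinity>" using assms by (auto simp: enn_root_def)
  then have "enn2real x powr (1 / p) \<le> 0" using assms by (simp add: enn_root_def)
  then have "enn2real x = 0" by (metis enn2real_nonneg order_antisym powr_gt_zero less_le_not_le)
  with \<open>x \<noteq> \<infinity>\<close> show ?thesis by (cases x) (auto simp: ennreal_eq_0_iff)
qed

lemma enn_root_mono:
  assumes "x \<le> y" "y \<noteq> \<infinity>" "0 < p"
  shows "enn_root p x \<le> enn_root p y"
proof -
  have "x \<noteq> \<infinity>" using assms by (auto simp: top_unique)
  moreover have "enn2real x \<le> enn2real y" using assms by (intro enn2real_mono) (auto simp: top.not_eq_extremum)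
  ultimately show ?thesis using assms
    by (auto simp: enn_root_def intro!: ennreal_leI powr_mono2)
qed

lemma enn_root_less_top: "x \<noteq> \<infinity> \<Longrightarrow> enn_root p x < \<infinity>"
  by (simp add: enn_root_def)

lemma root_tri:
  assumes p: "1 \<le> p" and f: "S12 \<noteq> \<infinity>" "S23 \<noteq> \<infinity>"
    and H: "\<And>a b. 0 < a \<Longrightarrow> 0 < b \<Longrightarrow> S12 \<le> ennreal (a powr p) \<Longrightarrow> S23 \<le> ennreal (b powr p)
              \<Longrightarrow> S13 \<le> ennreal ((a + b) powr p)"
  shows "enn_root p S13 \<le> enn_root p S12 + enn_root p S23"
proof -
  define A where "A = enn2real S12 powr (1 / p)"
  define B where "B = enn2real S23 powr (1 / p)"
  have AB: "0 \<le> A" "0 \<le> B" by (auto simp: A_def B_def)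
  have pw: "(enn2real S powr (1 / p)) powr p = enn2real S" for S
    using p by (simp add: powr_powr)
  have main: "S13 \<noteq> \<infinity> \<and> enn2real S13 powr (1 / p) \<le> A + B + 2 * e" if e: "0 < e" for e
  proof -
    have le1: "S12 \<le> ennreal ((A + e) powr p)"
    proof -
      have "enn2real S12 = A powr p" unfolding A_def using pw by simp
      also have "\<dots> \<le> (A + e) powr p" using AB e p by (intro powr_mono2) auto
      finally show ?thesis using f(1) by (cases S12) auto
    qed
    have le2: "S23 \<le> ennreal ((B + e) powr p)"
    proof -
      have "enn2real S23 = B powr p" unfolding B_def using pw by simp
      also have "\<dots> \<le> (B + e) powr p" using AB e p by (intro powr_mono2) auto
      finally show ?thesis using f(2) by (cases S23) auto
    qed
    have S13: "S13 \<le> ennreal ((A + e + (B + e)) powr p)"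
      using H[OF _ _ le1 le2] AB e by simp
    then have fin: "S13 \<noteq> \<infinity>" by (auto simp: top_unique)
    have "enn2real S13 \<le> (A + e + (B + e)) powr p"
      using S13 fin by (cases S13) auto
    then have "enn2real S13 powr (1 / p) \<le> ((A + e + (B + e)) powr p) powr (1 / p)"
      using p by (intro powr_mono2) auto
    also have "\<dots> = A + e + (B + e)" using p AB e by (simp add: powr_powr)
    finally show ?thesis using fin by simp
  qed
  have fin: "S13 \<noteq> \<infinity>" using main[of 1] by simp
  have "enn2real S13 powr (1 / p) \<le> A + B"
  proof (rule field_le_epsilon)
    fix e :: real assume "0 < e"
    then show "enn2real S13 powr (1 / p) \<le> A + B + e" using main[of "e / 2"] by simp
  qed
  then show ?thesis using fin f AB
    by (simp add: enn_root_fin A_def B_def ennreal_plus[symmetric] del: ennreal_plus)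
qed




lemma SK_eq:
  assumes p: "1 \<le> p" and m: "\<mu> \<in> P_p p" "\<nu> \<in> P_p p"
  shows "(\<Sum>k<K. Wpp p (slice \<mu> (\<theta> k)) (slice \<nu> (\<theta> k))) / of_nat K
    = inverse (of_nat K) * (\<Sum>k<K. \<integral>\<^sup>+ u. ennreal (\<bar>qf (slice \<mu> (\<theta> k)) u - qf (slice \<nu> (\<theta> k)) u\<bar> powr p) \<partial>U01)"
  by (simp add: divide_ennreal_def mult.commute Wpp_eq[OF p slice_rd[OF m(1)] slice_rd[OF m(2)]])

lemma SK_bound:
  assumes p: "1 \<le> p" and m: "\<mu> \<in> P_p p" "\<nu> \<in> P_p p" and K: "1 \<le> K" and fr: "orthonormal_frame K \<theta>"
  shows "(\<Sum>k<K. Wpp p (slice \<mu> (\<theta> k)) (slice \<nu> (\<theta> k))) / of_nat K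
    \<le> ennreal (2 powr p) * ((\<integral>\<^sup>+ x. ennreal (norm x powr p) \<partial>\<mu>) + (\<integral>\<^sup>+ x. ennreal (norm x powr p) \<partial>\<nu>))"
    (is "_ \<le> ?B")
proof -
  have "(\<Sum>k<K. Wpp p (slice \<mu> (\<theta> k)) (slice \<nu> (\<theta> k))) \<le> (\<Sum>k<K. ?B)"
  proof (rule sum_mono)
    fix k assume "k \<in> {..<K}"
    then have n: "norm (\<theta> k) = 1" using frame_norm[OF fr] by simp
    have "Wpp p (slice \<mu> (\<theta> k)) (slice \<nu> (\<theta> k)) \<le> ennreal (2 powr p) * ((\<integral>\<^sup>+ x. ennreal (\<bar>x\<bar> powr p) \<partial>slice \<mu> (\<theta> k)) + (\<integral>\<^sup>+ x. ennreal (\<bar>x\<bar> powr p) \<partial>slice \<nu> (\<theta> k)))"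
      by (rule Wpp_bound[OF p slice_rd[OF m(1)] slice_rd[OF m(2)]])
    also have "\<dots> \<le> ?B"
      using p by (intro mult_left_mono add_mono slice_moment[OF m(1) n] slice_moment[OF m(2) n]) auto
    finally show "Wpp p (slice \<mu> (\<theta> k)) (slice \<nu> (\<theta> k)) \<le> ?B" .
  qed
  also have "\<dots> = of_nat K * ?B" by simp
  finally have "(\<Sum>k<K. Wpp p (slice \<mu> (\<theta> k)) (slice \<nu> (\<theta> k))) / of_nat K \<le> (of_nat K * ?B) / of_nat K"
    by (intro divide_right_mono_ennreal)
  also have "(of_nat K * ?B) / of_nat K = ?B"
    using K by (subst mult.commute) (intro ennreal_mult_divide_eq, auto)
  finally show ?thesis .
qed


lemma moment_fin: "\<mu> \<in> P_p p \<Longrightarrow> (\<integral>\<^sup>+ x. ennreal (norm x powr p) \<partial>\<mu>) \<noteq> \<infinity>"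
  by (auto simp: P_p_def)

lemma SK_fin:
  assumes p: "1 \<le> p" and m: "\<mu> \<in> P_p p" "\<nu> \<in> P_p p" and K: "1 \<le> K" and fr: "orthonormal_frame K \<theta>"
  shows "(\<Sum>k<K. Wpp p (slice \<mu> (\<theta> k)) (slice \<nu> (\<theta> k))) / of_nat K \<noteq> \<infinity>"
proof -
  have "ennreal (2 powr p) * ((\<integral>\<^sup>+ x. ennreal (norm x powr p) \<partial>\<mu>) + (\<integral>\<^sup>+ x. ennreal (norm x powr p) \<partial>\<nu>)) < \<infinity>"
    using moment_fin[OF m(1)] moment_fin[OF m(2)] by (simp add: ennreal_mult_less_top less_top)
  then show ?thesis using SK_bound[OF assms] by (auto simp: top_unique)
qed

theorem proposition1:
  fixes K :: nat and p :: real and \<mu>1 \<mu>2 \<mu>3 :: "'a::euclidean_space measure"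
  assumes "1 \<le> K" and "K \<le> DIM('a)" and "1 \<le> p"
    and "\<mu>1 \<in> P_p p" and "\<mu>2 \<in> P_p p" and "\<mu>3 \<in> P_p p"
  shows "max_K_SW K p \<mu>1 \<mu>2 < \<infinity>
    \<and> (max_K_SW K p \<mu>1 \<mu>2 = 0 \<longleftrightarrow> \<mu>1 = \<mu>2)
    \<and> max_K_SW K p \<mu>1 \<mu>2 = max_K_SW K p \<mu>2 \<mu>1
    \<and> max_K_SW K p \<mu>1 \<mu>3 \<le> max_K_SW K p \<mu>1 \<mu>2 + max_K_SW K p \<mu>2 \<mu>3"
proof -
  note K = assms(1) and KD = assms(2) and p = assms(3) and m1 = assms(4) and m2 = assms(5) and m3 = assms(6)
  let ?S = "\<lambda>\<mu> \<nu> \<theta>. (\<Sum>k<K. Wpp p (slice \<mu> (\<theta> k)) (slice \<nu> (\<theta> k))) / (of_nat K :: ennreal)"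
  have mk: "max_K_SW K p \<mu> \<nu> = (SUP \<theta>\<in>{\<theta>. orthonormal_frame K \<theta>}. enn_root p (?S \<mu> \<nu> \<theta>))" for \<mu> \<nu> :: "'a measure"
    by (simp add: max_K_SW_def)
  have p0: "0 < p" using p by simp
  define B where "B = ennreal (2 powr p) * ((\<integral>\<^sup>+ x. ennreal (norm x powr p) \<partial>\<mu>1) + (\<integral>\<^sup>+ x. ennreal (norm x powr p) \<partial>\<mu>2))"
  have Bfin: "B \<noteq> \<infinity>"
    using moment_fin[OF m1] moment_fin[OF m2] by (simp add: B_def ennreal_mult_eq_top_iff)
  have fin: "max_K_SW K p \<mu>1 \<mu>2 < \<infinity>"
  proof -
    have "max_K_SW K p \<mu>1 \<mu>2 \<le> enn_root p B"
      unfolding mk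
    proof (rule SUP_least)
      fix \<theta> :: "nat \<Rightarrow> 'a" assume "\<theta> \<in> {\<theta>. orthonormal_frame K \<theta>}"
      then have fr: "orthonormal_frame K \<theta>" by simp
      show "enn_root p (?S \<mu>1 \<mu>2 \<theta>) \<le> enn_root p B"
        by (rule enn_root_mono[OF _ Bfin p0]) (unfold B_def, rule SK_bound[OF p m1 m2 K fr])
    qed
    also have "\<dots> < \<infinity>" by (rule enn_root_less_top[OF Bfin])
    finally show ?thesis .
  qed
  have sym: "max_K_SW K p \<mu>1 \<mu>2 = max_K_SW K p \<mu>2 \<mu>1"
    unfolding mk using Wpp_sym[OF p slice_rd[OF m1] slice_rd[OF m2]] by simp
  have zero: "max_K_SW K p \<mu>1 \<mu>2 = 0 \<longleftrightarrow> \<mu>1 = \<mu>2"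
  proof
    assume "\<mu>1 = \<mu>2"
    then show "max_K_SW K p \<mu>1 \<mu>2 = 0"
      unfolding mk using Wpp_self[OF p slice_rd[OF m2]] by (simp add: enn_root_zero) (simp add: bot_ennreal[symmetric] enn_root_zero)
  next
    assume z: "max_K_SW K p \<mu>1 \<mu>2 = 0"
    have fz: "?S \<mu>1 \<mu>2 \<theta> = 0" if fr: "orthonormal_frame K \<theta>" for \<theta> :: "nat \<Rightarrow> 'a"
    proof -
      have "enn_root p (?S \<mu>1 \<mu>2 \<theta>) \<le> max_K_SW K p \<mu>1 \<mu>2"
        unfolding mk by (rule SUP_upper) (simp add: fr)
      then have "enn_root p (?S \<mu>1 \<mu>2 \<theta>) = 0" using z by simp
      then show ?thesis by (rule enn_root_eq0)
    qed
    show "\<mu>1 = \<mu>2"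
    proof (rule cramer_wold)
      show "prob_space \<mu>1" "sets \<mu>1 = sets borel" "prob_space \<mu>2" "sets \<mu>2 = sets borel"
        using m1 m2 by (auto simp: P_p_def)
      fix u :: 'a assume u: "norm u = 1"
      obtain \<theta> where fr: "orthonormal_frame K \<theta>" and t0: "\<theta> 0 = u"
        using frame_exists[OF u KD] by blast
      have "?S \<mu>1 \<mu>2 \<theta> = 0" by (rule fz[OF fr])
      then have "(\<Sum>k<K. Wpp p (slice \<mu>1 (\<theta> k)) (slice \<mu>2 (\<theta> k))) = 0"
        using K by (simp add: ennreal_divide_eq_0_iff)
      then have "Wpp p (slice \<mu>1 (\<theta> 0)) (slice \<mu>2 (\<theta> 0)) = 0"
        using K by (simp add: sum_eq_0_iff)
      then show "slice \<mu>1 u = slice \<mu>2 u"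
        using Wpp_zero[OF p slice_rd[OF m1] slice_rd[OF m2]] t0 by simp
    qed
  qed
  have tri: "max_K_SW K p \<mu>1 \<mu>3 \<le> max_K_SW K p \<mu>1 \<mu>2 + max_K_SW K p \<mu>2 \<mu>3"
    unfolding mk[of \<mu>1 \<mu>3]
  proof (rule SUP_least)
    fix \<theta> :: "nat \<Rightarrow> 'a" assume "\<theta> \<in> {\<theta>. orthonormal_frame K \<theta>}"
    then have fr: "orthonormal_frame K \<theta>" by simp
    let ?q = "\<lambda>\<mu> k u. qf (slice \<mu> (\<theta> k)) u"
    have "enn_root p (?S \<mu>1 \<mu>3 \<theta>) \<le> enn_root p (?S \<mu>1 \<mu>2 \<theta>) + enn_root p (?S \<mu>2 \<mu>3 \<theta>)"
    proof (rule root_tri[OF p SK_fin[OF p m1 m2 K fr] SK_fin[OF p m2 m3 K fr]])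
      fix a b :: real assume a: "0 < a" and b: "0 < b"
        and h1: "?S \<mu>1 \<mu>2 \<theta> \<le> ennreal (a powr p)" and h2: "?S \<mu>2 \<mu>3 \<theta> \<le> ennreal (b powr p)"
      have mf: "(\<lambda>u. ?q \<mu> k u - ?q \<nu> k u) \<in> borel_measurable U01" if "\<mu> \<in> P_p p" "\<nu> \<in> P_p p" for \<mu> \<nu> k
        using qf_measurable[OF slice_rd[OF that(1)]] qf_measurable[OF slice_rd[OF that(2)]] by measurable
      have "inverse (of_nat K) * (\<Sum>k<K. \<integral>\<^sup>+ u. ennreal (\<bar>(?q \<mu>1 k u - ?q \<mu>2 k u) + (?q \<mu>2 k u - ?q \<mu>3 k u)\<bar> powr p) \<partial>U01) \<le> ennreal ((a + b) powr p)"
        by (rule minkowski_sum[OF p a b mf[OF m1 m2] mf[OF m2 m3]])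
           (use h1 h2 SK_eq[OF p m1 m2] SK_eq[OF p m2 m3] in simp_all)
      then show "?S \<mu>1 \<mu>3 \<theta> \<le> ennreal ((a + b) powr p)"
        using SK_eq[OF p m1 m3] by simp
    qed
    also have "\<dots> \<le> max_K_SW K p \<mu>1 \<mu>2 + max_K_SW K p \<mu>2 \<mu>3"
      unfolding mk by (intro add_mono SUP_upper) (simp_all add: fr)
    finally show "enn_root p (?S \<mu>1 \<mu>3 \<theta>) \<le> max_K_SW K p \<mu>1 \<mu>2 + max_K_SW K p \<mu>2 \<mu>3" .
  qed
  show ?thesis using fin zero sym tri by blast
qed


end
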